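(* Suppose that all conditions listed in the context hold (without requiring $M_{24}<0$), where $R_4$ is chosen as $R_4=\mathbf{0}$. If $L_1=\Gamma_{11}^{-1}X_1^{-1}R_2$, $L_2=P_1^{-1}R_1+ET_{14}^{-1}T_{13}L_1$, $K_1=R_3P_2^{-1}$, then the feedback controller $u=K_1\hat x$ with the observer renders the closed-loop system ISS w.r.t. $w$.
   Context: System: $\dot x=Ax+Bu+Ep(q)+E_ww$, $y=Cx+Du+F_ww$, $q=C_qx$, $p:\mathbb{R}^{n_q}\to\mathbb{R}^{n_p}$, $p(\mathbf{0})=\mathbf{0}$; a symmetric $M$ is a $\delta$-MM for $p$ if $\begin{pmatrix}\delta q\\ \delta p\end{pmatrix}^\top M\begin{pmatrix}\delta q\\ \delta p\end{pmatrix}\geq0$ for all $q_1,q_2$, $\delta q=q_2-q_1$, $\delta p=p(q_2)-p(q_1)$. Observer: $\dot{\hat x}=A\hat x+Bu+Ep(\hat q+L_1(\hat y-y))+L_2(\hat y-y)$, $\hat y=C\hat x+Du$, $\hat q=C_q\hat x$. Conditions: (i) there exist a set $\mathcal{N}_1$ of symmetric pairs $(X_1,Y_1)$ ($X_1\in\mathbb{R}^{n_q\times n_q}$, $Y_1\in\mathbb{R}^{n_p\times n_p}$) and an invertible $T_1=\begin{pmatrix}T_{11}&T_{12}\\ T_{13}&T_{14}\end{pmatrix}$, $T_{14}$ invertible, with $T_1^\top\begin{pmatrix}X_1&\mathbf{0}\\ \mathbf{0}&-Y_1\end{pmatrix}T_1$ a $\delta$-MM of $p$ for all $(X_1,Y_1)\in\mathcal{N}_1$;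 (ii) there exist a set $\mathcal{N}_2$ of symmetric invertible pairs $(X_2,Y_2)$ and an invertible $T_2=\begin{pmatrix}T_{21}&T_{22}\\ T_{23}&T_{24}\end{pmatrix}$, $T_{24}$ invertible, with $T_2^\top\begin{pmatrix}X_2^{-1}&\mathbf{0}\\ \mathbf{0}&-Y_2^{-1}\end{pmatrix}T_2$ a $\delta$-MM of $p$ for all $(X_2,Y_2)\in\mathcal{N}_2$; (iii) there exist $\alpha_1,\alpha_2,\mu_1,\mu_2>0$, matrices $R_1,R_2,R_3,R_4$, $P_1=P_1^\top>0$, $P_2=P_2^\top>0$, $X_1=X_1^\top>0$, $Y_1=Y_1^\top$, $X_2=X_2^\top>0$, $Y_2=Y_2^\top>0$, $(X_i,Y_i)\in\mathcal{N}_i$, such that $\begin{pmatrix}\Phi-\varphi^\top Y_1\varphi & \phi^\top\\ \phi & -X_1\end{pmatrix}\leq0$ and $\begin{pmatrix}\Psi-\varphi^\top Y_2\varphi & \psi^\top\\ \psi & -X_2\end{pmatrix}\leq0$, with $\Phi=\begin{pmatrix}\Phi_0&-P_1\tilde E_1&P_1E_w+R_1F_w\\ *&\mathbf{0}&\mathbf{0}\\ *&*&-\mu_1I\end{pmatrix}$, $\Phi_0=\tilde A_1^\top P_1+P_1\tilde A_1+C^\top R_1^\top+R_1C+\alpha_1P_1$, $\Psi=\begin{pmatrix}\Psi_0&\tilde E_2Y_2+BR_4&E_w\\ *&\mathbf{0}&\mathbf{0}\\ *&*&-\mu_2I\end{pmatrix}$, $\Psi_0=\tilde A_2P_2+P_2\tilde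 A_2^\top+BR_3+R_3^\top B^\top+\alpha_2P_2$, $\phi=(-(X_1\Gamma_{11}C_q+R_2C),X_1\Gamma_{12},-R_2F_w)$, $\varphi=(\mathbf{0}_{n_p\times n_x},I_{n_p},\mathbf{0}_{n_p\times n_w})$, $\psi=(\Gamma_{21}C_qP_2,\Gamma_{22}Y_2,\mathbf{0}_{n_q\times n_w})$, $\tilde A_i=A-ET_{i4}^{-1}T_{i3}C_q$, $\tilde E_i=ET_{i4}^{-1}$, $\Gamma_{i1}=T_{i1}-T_{i2}T_{i4}^{-1}T_{i3}$, $\Gamma_{i2}=T_{i2}T_{i4}^{-1}$. Here $M_{24}$ denotes the lower-right $n_p\times n_p$ block of the multiplier in (ii). ISS w.r.t. $w$ means there exist $\beta\in\mathcal{KL}$, $\gamma\in\mathcal{K}$ with $\|(x,x-\hat x)(t)\|\leq\beta(\|(x,x-\hat x)(0)\|,t)+\gamma(\|w\|_\infty)$. *)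

theory Defs
  imports "HOL-Analysis.Analysis"
begin

text \<open>A matrix real^'c^'r has rows indexed by 'r and columns by 'c.\<close>

definition vjoin :: "real^'a \<Rightarrow> real^'b \<Rightarrow> real^('a + 'b)" where
  "vjoin u v = (\<chi> i. case i of Inl j \<Rightarrow> u $ j | Inr j \<Rightarrow> v $ j)"

definition hcat :: "real^'c1^'r \<Rightarrow> real^'c2^'r \<Rightarrow> real^('c1 + 'c2)^'r" where
  "hcat M N = (\<chi> i j. case j of Inl j1 \<Rightarrow> M $ i $ j1 | Inr j2 \<Rightarrow> N $ i $ j2)"

definition vcat :: "real^'c^'r1 \<Rightarrow> real^'c^'r2 \<Rightarrow> real^'c^('r1 + 'r2)" where
  "vcat M N = (\<chi> i. case i of Inl i1 \<Rightarrow> M $ i1 | Inr i2 \<Rightarrow> N $ i2)"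

definition blk2 :: "real^'c1^'r1 \<Rightarrow> real^'c2^'r1 \<Rightarrow> real^'c1^'r2 \<Rightarrow> real^'c2^'r2
                     \<Rightarrow> real^('c1 + 'c2)^('r1 + 'r2)" where
  "blk2 M11 M12 M21 M22 = vcat (hcat M11 M12) (hcat M21 M22)"

definition nsd :: "real^'n^'n \<Rightarrow> bool" where
  "nsd M \<longleftrightarrow> transpose M = M \<and> (\<forall>v. v \<bullet> (M *v v) \<le> 0)"

definition pdef :: "real^'n^'n \<Rightarrow> bool" where
  "pdef P \<longleftrightarrow> transpose P = P \<and> (\<forall>v. v \<noteq> 0 \<longrightarrow> v \<bullet> (P *v v) > 0)"

definition dMM :: "(real^'nq \<Rightarrow> real^'np) \<Rightarrow> real^('nq + 'np)^('nq + 'np) \<Rightarrow> bool" where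
  "dMM p M \<longleftrightarrow> transpose M = M \<and>
     (\<forall>q1 q2. vjoin (q2 - q1) (p q2 - p q1) \<bullet> (M *v vjoin (q2 - q1) (p q2 - p q1)) \<ge> 0)"

definition classK :: "(real \<Rightarrow> real) \<Rightarrow> bool" where
  "classK \<gamma> \<longleftrightarrow> \<gamma> 0 = 0 \<and> continuous_on {0..} \<gamma> \<and> strict_mono_on {0..} \<gamma>"

definition classKL :: "(real \<Rightarrow> real \<Rightarrow> real) \<Rightarrow> bool" where
  "classKL \<beta> \<longleftrightarrow> (\<forall>t\<ge>0. classK (\<lambda>r. \<beta> r t)) \<and>
     (\<forall>r\<ge>0. (\<forall>s t. 0 \<le> s \<longrightarrow> s \<le> t \<longrightarrow> \<beta> r t \<le> \<beta> r s) \<and> ((\<beta> r) \<longlongrightarrow> 0) at_top)"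

definition cl_rhs_x ::
  "real^'nx^'nx \<Rightarrow> real^'nu^'nx \<Rightarrow> real^'np^'nx \<Rightarrow> real^'nw^'nx \<Rightarrow> real^'nx^'nq
   \<Rightarrow> (real^'nq \<Rightarrow> real^'np) \<Rightarrow> real^'nx^'nu
   \<Rightarrow> real^'nx \<Rightarrow> real^'nx \<Rightarrow> real^'nw \<Rightarrow> real^'nx" where
  "cl_rhs_x A B E Ew Cq p K1 x xh w = A *v x + B *v (K1 *v xh) + E *v p (Cq *v x) + Ew *v w"

definition cl_rhs_xh ::
  "real^'nx^'nx \<Rightarrow> real^'nu^'nx \<Rightarrow> real^'nx^'ny \<Rightarrow> real^'nu^'ny \<Rightarrow> real^'np^'nx
   \<Rightarrow> real^'nw^'ny \<Rightarrow> real^'nx^'nq \<Rightarrow> (real^'nq \<Rightarrow> real^'np)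
   \<Rightarrow> real^'ny^'nq \<Rightarrow> real^'ny^'nx \<Rightarrow> real^'nx^'nu
   \<Rightarrow> real^'nx \<Rightarrow> real^'nx \<Rightarrow> real^'nw \<Rightarrow> real^'nx" where
  "cl_rhs_xh A B C D E Fw Cq p L1 L2 K1 x xh w =
     (let u = K1 *v xh;
          y = C *v x + D *v u + Fw *v w;
          yh = C *v xh + D *v u;
          qh = Cq *v xh
      in A *v xh + B *v u + E *v p (qh + L1 *v (yh - y)) + L2 *v (yh - y))"

text \<open>Solutions on [0,\<infinity>) in the Caratheodory (integral) sense.\<close>
definition cl_solution where
  "cl_solution A B C D E Ew Fw Cq p L1 L2 K1 x xh w \<longleftrightarrow>
     (\<forall>t\<ge>0. ((\<lambda>s. cl_rhs_x A B E Ew Cq p K1 (x s) (xh s) (w s)) has_integral (x t - x 0)) {0..t}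
          \<and> ((\<lambda>s. cl_rhs_xh A B C D E Fw Cq p L1 L2 K1 (x s) (xh s) (w s))
                 has_integral (xh t - xh 0)) {0..t})"

definition closed_loop_ISS where
  "closed_loop_ISS A B C D E Ew Fw Cq p L1 L2 K1 \<longleftrightarrow>
     (\<exists>\<beta> \<gamma>. classKL \<beta> \<and> classK \<gamma> \<and>
        (\<forall>x xh w. cl_solution A B C D E Ew Fw Cq p L1 L2 K1 x xh w \<longrightarrow>
           bdd_above ((\<lambda>s. norm (w s)) ` {0..}) \<longrightarrow>
           (\<forall>t\<ge>0. norm (x t, x t - xh t)
                    \<le> \<beta> (norm (x 0, x 0 - xh 0)) t + \<gamma> (SUP s\<in>{0..}. norm (w s)))))"

end

theory Submission
  imports Defs
begin


lemma sum_UNIV_Plus: "(\<Sum>i\<in>(UNIV::('a::finite+'b::finite) set). f i) = (\<Sum>i\<in>UNIV. f (Inl i)) + (\<Sum>i\<in>UNIV. f (Inr i))"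
  by (subst UNIV_Plus_UNIV[symmetric], subst sum.Plus) auto

lemma vjoin_inner: "vjoin a b \<bullet> vjoin c d = a \<bullet> c + b \<bullet> d"
  by (simp add: inner_vec_def vjoin_def sum_UNIV_Plus)

lemma hcat_mult: "hcat M N *v vjoin u v = M *v u + N *v v"
  by (simp add: vec_eq_iff matrix_vector_mult_def hcat_def vjoin_def sum_UNIV_Plus)

lemma vcat_mult: "vcat M N *v u = vjoin (M *v u) (N *v u)"
  by (simp add: vec_eq_iff matrix_vector_mult_def vcat_def vjoin_def split: sum.split)

lemma blk2_mult: "blk2 A B C D *v vjoin u v = vjoin (A *v u + B *v v) (C *v u + D *v v)"
  by (simp add: blk2_def vcat_mult hcat_mult)

lemma tr_inner: fixes u :: "real^'m" and v :: "real^'n" shows "u \<bullet> (transpose M *v v) = (M *v u) \<bullet> v"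
proof -
  have "u \<bullet> (transpose M *v v) = (\<Sum>i\<in>UNIV. \<Sum>j\<in>UNIV. u $ i * M $ j $ i * v $ j)"
    by (simp add: inner_vec_def matrix_vector_mult_def transpose_def sum_distrib_left mult_ac)
  also have "\<dots> = (\<Sum>j\<in>UNIV. \<Sum>i\<in>UNIV. u $ i * M $ j $ i * v $ j)"
    by (rule sum.swap)
  also have "\<dots> = (M *v u) \<bullet> v"
    by (simp add: inner_vec_def matrix_vector_mult_def sum_distrib_left mult_ac)
  finally show ?thesis .
qed

lemma blk2_quad: "vjoin u v \<bullet> (blk2 A B C D *v vjoin u v) = u \<bullet> (A *v u) + u \<bullet> (B *v v) + v \<bullet> (C *v u) + v \<bullet> (D *v v)"
  by (simp add: blk2_mult vjoin_inner inner_add_right)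

lemma vjoin_add: "vjoin a b + vjoin c d = vjoin (a+c) (b+d)"
  by (simp add: vjoin_def vec_eq_iff split: sum.split)
lemma vjoin_scale: "r *\<^sub>R vjoin a b = vjoin (r *\<^sub>R a) (r *\<^sub>R b)"
  by (simp add: vjoin_def vec_eq_iff split: sum.split)
lemma vjoin_minus: "vjoin a b - vjoin c d = vjoin (a-c) (b-d)"
  by (simp add: vjoin_def vec_eq_iff split: sum.split)
lemma vjoin_zero: "vjoin 0 0 = 0"
  by (simp add: vjoin_def vec_eq_iff split: sum.split)
lemma norm_vjoin: "norm (vjoin a b) ^ 2 = norm a ^ 2 + norm b ^ 2"
  by (simp add: power2_norm_eq_inner vjoin_inner)



lemma inv_facts:
  fixes A :: "real^'n^'n"
  assumes "invertible A"
  shows "A ** matrix_inv A = mat 1" "matrix_inv A ** A = mat 1"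
    "A *v (matrix_inv A *v v) = v" "matrix_inv A *v (A *v v) = v"
proof -
  have "\<exists>A'. A ** A' = mat 1 \<and> A' ** A = mat 1" using assms by (simp add: invertible_def)
  then have *: "A ** matrix_inv A = mat 1 \<and> matrix_inv A ** A = mat 1"
    unfolding matrix_inv_def by (rule someI_ex)
  then show "A ** matrix_inv A = mat 1" "matrix_inv A ** A = mat 1" by auto
  show "A *v (matrix_inv A *v v) = v" "matrix_inv A *v (A *v v) = v"
    using * by (simp_all add: matrix_vector_mul_assoc)
qed

lemma pdef_invertible:
  fixes P :: "real^'n^'n"
  assumes "pdef P" shows "invertible P"
proof -
  have "\<forall>x. P *v x = 0 \<longrightarrow> x = 0"
  proof (intro allI impI)
    fix x assume "P *v x = 0"
    then have "x \<bullet> (P *v x) = 0" by simp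
    then show "x = 0" using assms unfolding pdef_def by (metis less_irrefl)
  qed
  then show ?thesis
    unfolding invertible_left_inverse matrix_left_invertible_ker .
qed

lemma neg_mv: "(- A) *v x = - (A *v (x::real^'n))"
  by (simp add: vec_eq_iff matrix_vector_mult_def sum_negf)
lemma mv_neg: "A *v (- x) = - (A *v (x::real^'n))"
  by (simp add: vec_eq_iff matrix_vector_mult_def sum_negf)
lemma scale_mv: "(c *\<^sub>R A) *v x = c *\<^sub>R (A *v (x::real^'n))"
  by (simp add: vec_eq_iff matrix_vector_mult_def sum_distrib_left mult.assoc)
lemma tr_mult_inner: fixes u :: "real^'m" shows "u \<bullet> ((transpose M ** N) *v v) = (M *v u) \<bullet> (N *v v)"
  by (simp only: matrix_vector_mul_assoc[symmetric], rule tr_inner)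

lemmas mvsimps = matrix_vector_mul_assoc[symmetric] matrix_vector_mult_add_rdistrib
  matrix_vector_mult_diff_rdistrib matrix_vector_right_distrib matrix_vector_mult_diff_distrib
  neg_mv mv_neg scale_mv



lemma tr_inner2: fixes u :: "real^'n" and v :: "real^'m" shows "(transpose M *v v) \<bullet> u = v \<bullet> (M *v u)"
  by (metis inner_commute tr_inner)

lemma sym_inner: fixes u v :: "real^'n" assumes "transpose P = P" shows "u \<bullet> (P *v v) = v \<bullet> (P *v u)"
  by (metis assms inner_commute tr_inner)

lemma obs_ineq:
  fixes A :: "real^'nx^'nx" and B :: "real^'nu^'nx" and E :: "real^'np^'nx"
    and Ew :: "real^'nw^'nx" and C :: "real^'nx^'ny" and D :: "real^'nu^'ny"
    and Fw :: "real^'nw^'ny" and Cq :: "real^'nx^'nq"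
    and p :: "real^'nq \<Rightarrow> real^'np"
    and T11 :: "real^'nq^'nq" and T12 :: "real^'np^'nq"
    and T13 :: "real^'nq^'np" and T14 :: "real^'np^'np"
    and \<alpha>1 \<mu>1 :: real
    and R1 :: "real^'ny^'nx" and R2 :: "real^'ny^'nq"
    and P1 :: "real^'nx^'nx"
    and X1 :: "real^'nq^'nq" and Y1 :: "real^'np^'np"
    and At1 :: "real^'nx^'nx" and Et1 :: "real^'np^'nx"
    and Gam11 :: "real^'nq^'nq" and Gam12 :: "real^'np^'nq"
    and L1 :: "real^'ny^'nq" and L2 :: "real^'ny^'nx" and K1 :: "real^'nx^'nu"
  assumes T14_inv: "invertible T14" and P1_inv: "invertible P1" and P1_sym: "transpose P1 = P1"
    and X1_inv: "invertible X1" and Gam11_inv: "invertible Gam11"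
    and mult1: "\<And>q1 q2. (T11 *v (q2 - q1) + T12 *v (p q2 - p q1)) \<bullet> (X1 *v (T11 *v (q2 - q1) + T12 *v (p q2 - p q1)))
        - (T13 *v (q2 - q1) + T14 *v (p q2 - p q1)) \<bullet> (Y1 *v (T13 *v (q2 - q1) + T14 *v (p q2 - p q1))) \<ge> 0"
    and At1_def: "At1 = A - E ** matrix_inv T14 ** T13 ** Cq"
    and Et1_def: "Et1 = E ** matrix_inv T14"
    and Gam11_def: "Gam11 = T11 - T12 ** matrix_inv T14 ** T13"
    and Gam12_def: "Gam12 = T12 ** matrix_inv T14"
    and LMI1: "nsd (let
        Phi0 = transpose At1 ** P1 + P1 ** At1 + transpose C ** transpose R1 + R1 ** C + \<alpha>1 *\<^sub>R P1;
        Phi = blk2 (blk2 Phi0 (- (P1 ** Et1)) (transpose (- (P1 ** Et1))) (0 :: real^'np^'np))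
                   (vcat (P1 ** Ew + R1 ** Fw) (0 :: real^'nw^'np))
                   (transpose (vcat (P1 ** Ew + R1 ** Fw) (0 :: real^'nw^'np)))
                   (- (\<mu>1 *\<^sub>R mat 1 :: real^'nw^'nw));
        vphi = hcat (hcat (0 :: real^'nx^'np) (mat 1 :: real^'np^'np)) (0 :: real^'nw^'np);
        phi = hcat (hcat (- (X1 ** Gam11 ** Cq + R2 ** C)) (X1 ** Gam12)) (- (R2 ** Fw))
      in blk2 (Phi - transpose vphi ** Y1 ** vphi) (transpose phi) phi (- X1))"
    and L1_def: "L1 = matrix_inv Gam11 ** matrix_inv X1 ** R2"
    and L2_def: "L2 = matrix_inv P1 ** R1 + E ** matrix_inv T14 ** T13 ** L1"
  shows "2 * ((xh - x) \<bullet> (P1 *v (cl_rhs_xh A B C D E Fw Cq p L1 L2 K1 x xh w - cl_rhs_x A B E Ew Cq p K1 x xh w)))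
     \<le> - \<alpha>1 * ((xh - x) \<bullet> (P1 *v (xh - x))) + \<mu>1 * (w \<bullet> w)"
proof -
  define d where "d = xh - x"
  define e where "e = C *v d - Fw *v w"
  define qh where "qh = Cq *v xh + L1 *v e"
  define dq where "dq = qh - Cq *v x"
  define dp where "dp = p qh - p (Cq *v x)"
  define z where "z = T13 *v dq + T14 *v dp"
  define r where "r = T11 *v dq + T12 *v dp"
  define fd where "fd = cl_rhs_xh A B C D E Fw Cq p L1 L2 K1 x xh w - cl_rhs_x A B E Ew Cq p K1 x xh w"
  have qh': "cl_rhs_xh A B C D E Fw Cq p L1 L2 K1 x xh w = A *v xh + B *v (K1 *v xh) + E *v p qh + L2 *v e"
    unfolding cl_rhs_xh_def Let_def qh_def e_def d_def
    by (simp add: algebra_simps)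
  have fd1: "fd = A *v d + E *v dp + L2 *v e - Ew *v w"
    unfolding fd_def qh' cl_rhs_x_def dp_def d_def by (simp add: algebra_simps)
  have dq_eq: "dq = Cq *v d + L1 *v e"
    unfolding dq_def qh_def d_def by (simp add: algebra_simps)
  have dp_eq: "dp = matrix_inv T14 *v z - matrix_inv T14 *v (T13 *v dq)"
    unfolding z_def by (simp add: algebra_simps inv_facts[OF T14_inv])
  have L2e: "L2 *v e = matrix_inv P1 *v (R1 *v e) + E *v (matrix_inv T14 *v (T13 *v (L1 *v e)))"
    unfolding L2_def by (simp add: mvsimps)
  have fd2: "fd = At1 *v d + Et1 *v z + matrix_inv P1 *v (R1 *v e) - Ew *v w"
    unfolding fd1 L2e dp_eq At1_def Et1_def dq_eq by (simp add: mvsimps algebra_simps)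
  have P1fd: "P1 *v fd = P1 *v (At1 *v d) + P1 *v (Et1 *v z) + R1 *v e - P1 *v (Ew *v w)"
    unfolding fd2 by (simp add: mvsimps inv_facts[OF P1_inv])
  have rz: "Gam11 *v dq + Gam12 *v z = r"
    unfolding Gam11_def Gam12_def z_def r_def by (simp add: mvsimps inv_facts[OF T14_inv])
  have X1r: "X1 *v r = (X1 ** Gam11 ** Cq + R2 ** C) *v d + (X1 ** Gam12) *v z - (R2 ** Fw) *v w"
  proof -
    have "X1 *v (Gam11 *v (L1 *v e)) = R2 *v e"
      unfolding L1_def by (simp add: mvsimps inv_facts[OF Gam11_inv] inv_facts[OF X1_inv])
    then show ?thesis
      unfolding rz[symmetric] dq_eq e_def by (simp add: mvsimps algebra_simps)
  qed
  have mlt: "r \<bullet> (X1 *v r) - z \<bullet> (Y1 *v z) \<ge> 0"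
    using mult1[of qh "Cq *v x"] unfolding r_def z_def dq_def dp_def .
  define G where "G = P1 ** Ew + R1 ** Fw"
  define Phi0 where "Phi0 = transpose At1 ** P1 + P1 ** At1 + transpose C ** transpose R1 + R1 ** C + \<alpha>1 *\<^sub>R P1"
  define Phi where "Phi = blk2 (blk2 Phi0 (- (P1 ** Et1)) (transpose (- (P1 ** Et1))) (0 :: real^'np^'np))
                   (vcat G (0 :: real^'nw^'np)) (transpose (vcat G (0 :: real^'nw^'np)))
                   (- (\<mu>1 *\<^sub>R mat 1 :: real^'nw^'nw))"
  define vphi where "vphi = hcat (hcat (0 :: real^'nx^'np) (mat 1 :: real^'np^'np)) (0 :: real^'nw^'np)"
  define phi where "phi = hcat (hcat (- (X1 ** Gam11 ** Cq + R2 ** C)) (X1 ** Gam12)) (- (R2 ** Fw))"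
  have LMI: "nsd (blk2 (Phi - transpose vphi ** Y1 ** vphi) (transpose phi) phi (- X1))"
    using LMI1 unfolding Let_def Phi_def Phi0_def vphi_def phi_def G_def .
  define a where "a = vjoin (vjoin (- d) z) w"
  have va: "vphi *v a = z" unfolding vphi_def a_def by (simp add: hcat_mult)
  have pa: "phi *v a = X1 *v r" unfolding phi_def a_def X1r by (simp add: hcat_mult mvsimps algebra_simps)
  have Q: "vjoin a r \<bullet> (blk2 (Phi - transpose vphi ** Y1 ** vphi) (transpose phi) phi (- X1) *v vjoin a r) \<le> 0"
    using LMI unfolding nsd_def by blast
  have Q2: "vjoin a r \<bullet> (blk2 (Phi - transpose vphi ** Y1 ** vphi) (transpose phi) phi (- X1) *v vjoin a r)
      = a \<bullet> (Phi *v a) - z \<bullet> (Y1 *v z) + r \<bullet> (X1 *v r)"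
  proof -
    have 1: "a \<bullet> ((transpose vphi ** Y1 ** vphi) *v a) = z \<bullet> (Y1 *v z)"
      by (simp only: matrix_vector_mul_assoc[symmetric] tr_inner va)
    have 2: "a \<bullet> (transpose phi *v r) = (X1 *v r) \<bullet> r"
      by (simp only: tr_inner pa)
    show ?thesis
      unfolding blk2_quad matrix_vector_mult_diff_rdistrib inner_diff_right 1 2 pa neg_mv inner_minus_right
      by (simp add: inner_commute)
  qed
  have t1: "d \<bullet> ((transpose At1 ** P1) *v d) = d \<bullet> (P1 *v (At1 *v d))"
    by (metis P1_sym inner_commute tr_inner tr_mult_inner)
  have t3: "d \<bullet> ((transpose C ** transpose R1) *v d) = d \<bullet> (R1 *v (C *v d))"
    by (metis inner_commute tr_inner tr_mult_inner)
  have Phi0q: "(- d) \<bullet> (Phi0 *v (- d)) = 2 * (d \<bullet> (P1 *v (At1 *v d))) + 2 * (d \<bullet> (R1 *v (C *v d))) + \<alpha>1 * (d \<bullet> (P1 *v d))"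
    using t1 t3 unfolding Phi0_def
    by (simp add: matrix_vector_mult_add_rdistrib scale_mv inner_add_right inner_diff_right mv_neg inner_minus_left inner_minus_right matrix_vector_mul_assoc[symmetric] del: transpose_matrix_vector)
  have aPa: "a \<bullet> (Phi *v a) = 2 * (d \<bullet> (P1 *v (At1 *v d))) + 2 * (d \<bullet> (R1 *v (C *v d))) + \<alpha>1 * (d \<bullet> (P1 *v d))
     + 2 * (d \<bullet> (P1 *v (Et1 *v z))) - 2 * (d \<bullet> (G *v w)) - \<mu>1 * (w \<bullet> w)"
  proof -
    have x1: "z \<bullet> (transpose (- (P1 ** Et1)) *v (- d)) = d \<bullet> (P1 *v (Et1 *v z))"
      by (simp only: tr_inner neg_mv inner_minus_left inner_minus_right matrix_vector_mul_assoc[symmetric] minus_minus inner_commute)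
    have x2: "w \<bullet> (transpose (vcat G (0 :: real^'nw^'np)) *v vjoin (- d) z) = - (d \<bullet> (G *v w))"
      by (simp add: tr_inner vcat_mult vjoin_inner inner_commute del: transpose_matrix_vector)
    show ?thesis
      unfolding Phi_def a_def blk2_quad x2
      unfolding x1 Phi0q
      by (simp del: transpose_matrix_vector add: vcat_mult vjoin_inner neg_mv scale_mv mv_neg inner_minus_left matrix_vector_mul_assoc[symmetric])
  qed
  have "2 * (d \<bullet> (P1 *v fd)) + \<alpha>1 * (d \<bullet> (P1 *v d)) - \<mu>1 * (w \<bullet> w) = a \<bullet> (Phi *v a)"
    unfolding aPa P1fd G_def e_def
    by (simp add: inner_add_right inner_diff_right mvsimps algebra_simps)
  then show ?thesis using Q Q2 mlt unfolding fd_def d_def by linarith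
qed



lemma plant_ineq:
  fixes A :: "real^'nx^'nx" and B :: "real^'nu^'nx" and E :: "real^'np^'nx"
    and Ew :: "real^'nw^'nx" and Cq :: "real^'nx^'nq"
    and p :: "real^'nq \<Rightarrow> real^'np"
    and T21 :: "real^'nq^'nq" and T22 :: "real^'np^'nq"
    and T23 :: "real^'nq^'np" and T24 :: "real^'np^'np"
    and \<alpha>2 \<mu>2 :: real
    and R3 :: "real^'nx^'nu" and R4 :: "real^'np^'nu"
    and P2 :: "real^'nx^'nx"
    and X2 :: "real^'nq^'nq" and Y2 :: "real^'np^'np"
    and At2 :: "real^'nx^'nx" and Et2 :: "real^'np^'nx"
    and Gam21 :: "real^'nq^'nq" and Gam22 :: "real^'np^'nq"
    and K1 :: "real^'nx^'nu"
  assumes T24_inv: "invertible T24" and P2_inv: "invertible P2" and P2_sym: "transpose P2 = P2"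
    and X2_inv: "invertible X2" and Y2_inv: "invertible Y2" and p0: "p 0 = 0"
    and mult2: "\<And>q1 q2. (T21 *v (q2 - q1) + T22 *v (p q2 - p q1)) \<bullet> (matrix_inv X2 *v (T21 *v (q2 - q1) + T22 *v (p q2 - p q1)))
        - (T23 *v (q2 - q1) + T24 *v (p q2 - p q1)) \<bullet> (matrix_inv Y2 *v (T23 *v (q2 - q1) + T24 *v (p q2 - p q1))) \<ge> 0"
    and At2_def: "At2 = A - E ** matrix_inv T24 ** T23 ** Cq"
    and Et2_def: "Et2 = E ** matrix_inv T24"
    and Gam21_def: "Gam21 = T21 - T22 ** matrix_inv T24 ** T23"
    and Gam22_def: "Gam22 = T22 ** matrix_inv T24"
    and LMI2: "nsd (let
        Psi0 = At2 ** P2 + P2 ** transpose At2 + B ** R3 + transpose R3 ** transpose B + \<alpha>2 *\<^sub>R P2;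
        Psi = blk2 (blk2 Psi0 (Et2 ** Y2 + B ** R4) (transpose (Et2 ** Y2 + B ** R4)) (0 :: real^'np^'np))
                   (vcat Ew (0 :: real^'nw^'np))
                   (transpose (vcat Ew (0 :: real^'nw^'np)))
                   (- (\<mu>2 *\<^sub>R mat 1 :: real^'nw^'nw));
        vphi = hcat (hcat (0 :: real^'nx^'np) (mat 1 :: real^'np^'np)) (0 :: real^'nw^'np);
        psi = hcat (hcat (Gam21 ** Cq ** P2) (Gam22 ** Y2)) (0 :: real^'nw^'nq)
      in blk2 (Psi - transpose vphi ** Y2 ** vphi) (transpose psi) psi (- X2))"
    and R4_zero: "R4 = 0"
    and K1_def: "K1 = R3 ** matrix_inv P2"
  shows "2 * ((matrix_inv P2 *v x) \<bullet> cl_rhs_x A B E Ew Cq p K1 x xh w)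
     \<le> - \<alpha>2 * ((matrix_inv P2 *v x) \<bullet> (P2 *v (matrix_inv P2 *v x))) + \<mu>2 * (w \<bullet> w)
        + 2 * ((matrix_inv P2 *v x) \<bullet> (B *v (K1 *v (xh - x))))"
proof -
  define \<xi> where "\<xi> = matrix_inv P2 *v x"
  have x_eq: "x = P2 *v \<xi>" unfolding \<xi>_def by (simp add: inv_facts[OF P2_inv])
  define pq where "pq = p (Cq *v x)"
  define z where "z = T23 *v (Cq *v x) + T24 *v pq"
  define s where "s = T21 *v (Cq *v x) + T22 *v pq"
  define \<zeta> where "\<zeta> = matrix_inv Y2 *v z"
  define r where "r = matrix_inv X2 *v s"
  have Y\<zeta>: "Y2 *v \<zeta> = z" unfolding \<zeta>_def by (simp add: inv_facts[OF Y2_inv])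
  have Xr: "X2 *v r = s" unfolding r_def by (simp add: inv_facts[OF X2_inv])
  have mlt: "s \<bullet> r - z \<bullet> \<zeta> \<ge> 0"
    using mult2[of "Cq *v x" 0] unfolding r_def \<zeta>_def s_def z_def pq_def by (simp add: p0)
  have pq_eq: "pq = matrix_inv T24 *v z - matrix_inv T24 *v (T23 *v (Cq *v x))"
    unfolding z_def by (simp add: algebra_simps inv_facts[OF T24_inv])
  have fx: "cl_rhs_x A B E Ew Cq p K1 x xh w = At2 *v x + B *v (K1 *v x) + Et2 *v z + B *v (K1 *v (xh - x)) + Ew *v w"
    unfolding cl_rhs_x_def pq_def[symmetric] pq_eq At2_def Et2_def by (simp add: mvsimps algebra_simps)
  have sz: "Gam21 *v (Cq *v x) + Gam22 *v z = s"
    unfolding Gam21_def Gam22_def z_def s_def by (simp add: mvsimps inv_facts[OF T24_inv])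
  define Psi0 where "Psi0 = At2 ** P2 + P2 ** transpose At2 + B ** R3 + transpose R3 ** transpose B + \<alpha>2 *\<^sub>R P2"
  define Psi where "Psi = blk2 (blk2 Psi0 (Et2 ** Y2 + B ** R4) (transpose (Et2 ** Y2 + B ** R4)) (0 :: real^'np^'np))
                   (vcat Ew (0 :: real^'nw^'np)) (transpose (vcat Ew (0 :: real^'nw^'np)))
                   (- (\<mu>2 *\<^sub>R mat 1 :: real^'nw^'nw))"
  define vphi where "vphi = hcat (hcat (0 :: real^'nx^'np) (mat 1 :: real^'np^'np)) (0 :: real^'nw^'np)"
  define psi where "psi = hcat (hcat (Gam21 ** Cq ** P2) (Gam22 ** Y2)) (0 :: real^'nw^'nq)"
  have LMI: "nsd (blk2 (Psi - transpose vphi ** Y2 ** vphi) (transpose psi) psi (- X2))"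
    using LMI2 unfolding Let_def Psi_def Psi0_def vphi_def psi_def .
  define a where "a = vjoin (vjoin \<xi> \<zeta>) w"
  have va: "vphi *v a = \<zeta>" unfolding vphi_def a_def by (simp add: hcat_mult)
  have pa: "psi *v a = X2 *v r" unfolding psi_def a_def Xr sz[symmetric]
    by (simp add: hcat_mult mvsimps x_eq[symmetric] Y\<zeta>)
  have Q: "vjoin a r \<bullet> (blk2 (Psi - transpose vphi ** Y2 ** vphi) (transpose psi) psi (- X2) *v vjoin a r) \<le> 0"
    using LMI unfolding nsd_def by blast
  have Q2: "vjoin a r \<bullet> (blk2 (Psi - transpose vphi ** Y2 ** vphi) (transpose psi) psi (- X2) *v vjoin a r)
      = a \<bullet> (Psi *v a) - \<zeta> \<bullet> (Y2 *v \<zeta>) + r \<bullet> (X2 *v r)"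
  proof -
    have 1: "a \<bullet> ((transpose vphi ** Y2 ** vphi) *v a) = \<zeta> \<bullet> (Y2 *v \<zeta>)"
      by (simp only: matrix_vector_mul_assoc[symmetric] tr_inner va)
    have 2: "a \<bullet> (transpose psi *v r) = (X2 *v r) \<bullet> r"
      by (simp only: tr_inner pa)
    show ?thesis
      unfolding blk2_quad matrix_vector_mult_diff_rdistrib inner_diff_right 1 2 pa neg_mv inner_minus_right
      by (simp add: inner_commute)
  qed
  have t2: "\<xi> \<bullet> ((P2 ** transpose At2) *v \<xi>) = \<xi> \<bullet> (At2 *v x)"
    unfolding x_eq by (metis P2_sym inner_commute tr_inner matrix_vector_mul_assoc)
  have t4: "\<xi> \<bullet> ((transpose R3 ** transpose B) *v \<xi>) = \<xi> \<bullet> (B *v (K1 *v x))"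
  proof -
    have "R3 *v \<xi> = K1 *v x" unfolding K1_def \<xi>_def by (simp add: matrix_vector_mul_assoc)
    then show ?thesis by (metis inner_commute tr_inner tr_mult_inner)
  qed
  have t1: "\<xi> \<bullet> ((At2 ** P2) *v \<xi>) = \<xi> \<bullet> (At2 *v x)"
    unfolding x_eq by (simp add: matrix_vector_mul_assoc)
  have t3: "\<xi> \<bullet> ((B ** R3) *v \<xi>) = \<xi> \<bullet> (B *v (K1 *v x))"
    unfolding K1_def \<xi>_def by (simp add: matrix_vector_mul_assoc matrix_mul_assoc)
  have Psi0q: "\<xi> \<bullet> (Psi0 *v \<xi>) = 2 * (\<xi> \<bullet> (At2 *v x)) + 2 * (\<xi> \<bullet> (B *v (K1 *v x))) + \<alpha>2 * (\<xi> \<bullet> (P2 *v \<xi>))"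
    using t1 t2 t3 t4 unfolding Psi0_def
    by (simp add: matrix_vector_mult_add_rdistrib scale_mv inner_add_right del: transpose_matrix_vector)
  have aPa: "a \<bullet> (Psi *v a) = 2 * (\<xi> \<bullet> (At2 *v x)) + 2 * (\<xi> \<bullet> (B *v (K1 *v x))) + \<alpha>2 * (\<xi> \<bullet> (P2 *v \<xi>))
     + 2 * (\<xi> \<bullet> (Et2 *v z)) + 2 * (\<xi> \<bullet> (Ew *v w)) - \<mu>2 * (w \<bullet> w)"
  proof -
    have x1: "\<zeta> \<bullet> (transpose (Et2 ** Y2 + B ** R4) *v \<xi>) = \<xi> \<bullet> (Et2 *v z)"
      by (simp only: tr_inner inner_commute, simp add: R4_zero matrix_vector_mul_assoc[symmetric] Y\<zeta>)
    have x0: "\<xi> \<bullet> ((Et2 ** Y2 + B ** R4) *v \<zeta>) = \<xi> \<bullet> (Et2 *v z)"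
      by (simp add: R4_zero matrix_vector_mul_assoc[symmetric] Y\<zeta>)
    have x2: "w \<bullet> (transpose (vcat Ew (0 :: real^'nw^'np)) *v vjoin \<xi> \<zeta>) = \<xi> \<bullet> (Ew *v w)"
      by (simp add: tr_inner vcat_mult vjoin_inner inner_commute del: transpose_matrix_vector)
    show ?thesis
      unfolding Psi_def a_def blk2_quad x2 x1 x0 Psi0q
      by (simp del: transpose_matrix_vector add: vcat_mult vjoin_inner neg_mv scale_mv mv_neg inner_minus_left)
  qed
  have "2 * (\<xi> \<bullet> cl_rhs_x A B E Ew Cq p K1 x xh w) + \<alpha>2 * (\<xi> \<bullet> (P2 *v \<xi>)) - \<mu>2 * (w \<bullet> w)
        - 2 * (\<xi> \<bullet> (B *v (K1 *v (xh - x)))) = a \<bullet> (Psi *v a)"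
    unfolding aPa fx by (simp add: inner_add_right algebra_simps)
  then show ?thesis using Q Q2 mlt Xr Y\<zeta> unfolding \<xi>_def[symmetric]
    by (simp add: inner_commute)
qed



lemma inner_Q_bound:
  fixes u v :: "real^'k"
  assumes nQ: "\<And>v. norm (Q *v v) \<le> nQ * norm v"
  shows "\<bar>u \<bullet> (Q *v v)\<bar> \<le> nQ * (norm u * norm v)"
proof -
  have "\<bar>u \<bullet> (Q *v v)\<bar> \<le> norm u * norm (Q *v v)" by (rule Cauchy_Schwarz_ineq2)
  also have "\<dots> \<le> norm u * (nQ * norm v)" by (rule mult_left_mono[OF nQ norm_ge_zero])
  finally show ?thesis by (simp add: mult_ac)
qed

lemma elem_est:
  fixes Xu Xv Xt Ft :: "real^'k" and Q :: "real^'k^'k"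
  assumes Qsym: "transpose Q = Q" and nQ: "\<And>v. norm (Q *v v) \<le> nQ * norm v" and nQpos: "nQ > 0"
    and l: "l \<ge> 0" and a: "a > 0" and c: "c \<ge> 0"
    and ineq: "2 * (Xt \<bullet> (Q *v Ft)) \<le> - a * (Xt \<bullet> (Q *v Xt)) + c"
    and BX: "norm Xt \<le> BX"
    and eta: "norm (Xu - Xt) \<le> \<eta>" "norm (Xv - Xt) \<le> \<eta>" "\<eta> \<le> 1" "\<eta> * norm Ft \<le> \<epsilon>" "0 < \<eta>"
    and Wu: "\<bar>Xu \<bullet> (Q *v Xu) - Xt \<bullet> (Q *v Xt)\<bar> \<le> \<epsilon>"
    and ex: "0 < ev" "ev \<le> E" "0 < e\<theta>" "e\<theta> \<le> E" "\<bar>e\<theta> - e\<tau>\<bar> \<le> \<epsilon>" "\<bar>ev - e\<tau>\<bar> \<le> \<epsilon>"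
       "ev - eu = l * a * e\<theta>"
    and BW: "\<bar>Xt \<bullet> (Q *v Xt)\<bar> \<le> BW"
  shows "ev * (Xv \<bullet> (Q *v Xv) - c / a) - eu * (Xu \<bullet> (Q *v Xu) - c / a)
     \<le> l * \<epsilon> * (a * (E + 2 * BW) + 2 * c + 4 * E * nQ) + E * (2 * BX * nQ + 4 * nQ) * norm (Xv - Xu - l *\<^sub>R Ft)"
proof -
  define \<Delta> where "\<Delta> = Xv - Xu"
  define er where "er = \<Delta> - l *\<^sub>R Ft"
  define Wu' where "Wu' = Xu \<bullet> (Q *v Xu)"
  define Wv where "Wv = Xv \<bullet> (Q *v Xv)"
  define Wt where "Wt = Xt \<bullet> (Q *v Xt)"
  have eps: "\<epsilon> \<ge> 0" using eta(4) eta(5) by (metis dual_order.trans mult_nonneg_nonneg norm_ge_zero less_imp_le)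
  have sym: "\<And>x y. x \<bullet> (Q *v y) = y \<bullet> (Q *v x)" by (rule sym_inner[OF Qsym])
  have Wdiff: "Wv - Wu' = 2 * (Xu \<bullet> (Q *v \<Delta>)) + \<Delta> \<bullet> (Q *v \<Delta>)"
  proof -
    have "Xv = Xu + \<Delta>" unfolding \<Delta>_def by simp
    then have "Wv = Wu' + Xu \<bullet> (Q *v \<Delta>) + \<Delta> \<bullet> (Q *v Xu) + \<Delta> \<bullet> (Q *v \<Delta>)"
      unfolding Wv_def Wu'_def by (simp add: matrix_vector_right_distrib inner_add_left inner_add_right)
    then show ?thesis using sym[of \<Delta> Xu] by simp
  qed
  have split1: "Xu \<bullet> (Q *v \<Delta>) = Xt \<bullet> (Q *v \<Delta>) + (Xu - Xt) \<bullet> (Q *v \<Delta>)"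
    by (simp add: inner_diff_left)
  have split2: "Xt \<bullet> (Q *v \<Delta>) = l * (Xt \<bullet> (Q *v Ft)) + Xt \<bullet> (Q *v er)"
    unfolding er_def by (simp add: matrix_vector_mult_diff_distrib matrix_vector_mult_scaleR inner_diff_right)
  have b1: "\<bar>Xt \<bullet> (Q *v er)\<bar> \<le> BX * nQ * norm er"
  proof -
    have "\<bar>Xt \<bullet> (Q *v er)\<bar> \<le> nQ * (norm Xt * norm er)" by (rule inner_Q_bound[OF nQ])
    also have "\<dots> \<le> nQ * (BX * norm er)" using BX nQpos by (simp add: mult_right_mono)
    finally show ?thesis by (simp add: mult_ac)
  qed
  have nD: "norm \<Delta> \<le> 2 * \<eta>"
  proof -
    have "norm \<Delta> \<le> norm (Xv - Xt) + norm (Xu - Xt)" unfolding \<Delta>_def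
      by (metis diff_diff_eq2 diff_add_cancel norm_triangle_ineq4)
    then show ?thesis using eta by linarith
  qed
  have nD2: "norm \<Delta> \<le> l * norm Ft + norm er"
  proof -
    have "\<Delta> = l *\<^sub>R Ft + er" unfolding er_def by simp
    then have "norm \<Delta> \<le> norm (l *\<^sub>R Ft) + norm er" by (metis norm_triangle_ineq)
    then show ?thesis using l by simp
  qed
  have b2: "\<bar>(Xu - Xt) \<bullet> (Q *v \<Delta>)\<bar> \<le> nQ * (\<eta> * norm \<Delta>)"
  proof -
    have "\<bar>(Xu - Xt) \<bullet> (Q *v \<Delta>)\<bar> \<le> nQ * (norm (Xu - Xt) * norm \<Delta>)" by (rule inner_Q_bound[OF nQ])
    also have "\<dots> \<le> nQ * (\<eta> * norm \<Delta>)" using eta(1) nQpos by (simp add: mult_right_mono)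
    finally show ?thesis .
  qed
  have b3: "\<bar>\<Delta> \<bullet> (Q *v \<Delta>)\<bar> \<le> nQ * (2 * \<eta> * norm \<Delta>)"
  proof -
    have "\<bar>\<Delta> \<bullet> (Q *v \<Delta>)\<bar> \<le> nQ * (norm \<Delta> * norm \<Delta>)" by (rule inner_Q_bound[OF nQ])
    also have "\<dots> \<le> nQ * (2 * \<eta> * norm \<Delta>)"
      using mult_right_mono[OF nD norm_ge_zero] nQpos by (intro mult_left_mono) auto
    finally show ?thesis .
  qed
  have eD: "\<eta> * norm \<Delta> \<le> l * \<epsilon> + norm er"
  proof -
    have "\<eta> * norm \<Delta> \<le> \<eta> * (l * norm Ft + norm er)" using nD2 eta(5) by (simp add: mult_left_mono)
    also have "\<dots> = l * (\<eta> * norm Ft) + \<eta> * norm er" by (simp add: algebra_simps)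
    also have "\<dots> \<le> l * \<epsilon> + 1 * norm er"
      using eta(3,4) l by (intro add_mono mult_left_mono mult_right_mono) auto
    finally show ?thesis by simp
  qed
  define R where "R = 2 * BX * nQ * norm er + 4 * nQ * (l * \<epsilon> + norm er)"
  have R0: "R \<ge> 0" unfolding R_def using nQpos l eps BX
    by (intro add_nonneg_nonneg mult_nonneg_nonneg) (auto intro: order_trans[OF norm_ge_zero])
  have WvWu: "Wv - Wu' \<le> l * (- a * Wt + c) + R"
  proof -
    have "Wv - Wu' \<le> 2 * (l * (Xt \<bullet> (Q *v Ft))) + 2 * (BX * nQ * norm er) + 2 * (nQ * (\<eta> * norm \<Delta>)) + nQ * (2 * \<eta> * norm \<Delta>)"
      using Wdiff split1 split2 b1 b2 b3 by (smt (verit, ccfv_threshold) abs_le_iff)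
    also have "2 * (l * (Xt \<bullet> (Q *v Ft))) \<le> l * (- a * Wt + c)"
      using mult_left_mono[OF ineq l] unfolding Wt_def by (simp add: algebra_simps)
    finally have "Wv - Wu' \<le> l * (- a * Wt + c) + 2 * (BX * nQ * norm er) + 4 * nQ * (\<eta> * norm \<Delta>)"
      by (simp add: algebra_simps)
    also have "4 * nQ * (\<eta> * norm \<Delta>) \<le> 4 * nQ * (l * \<epsilon> + norm er)"
      using eD nQpos by (simp add: mult_left_mono)
    finally show ?thesis unfolding R_def by (simp add: algebra_simps)
  qed
  have st1: "ev * (Wv - Wu') \<le> ev * (l * (- a * Wt + c)) + E * R"
  proof -
    have "ev * (Wv - Wu') \<le> ev * (l * (- a * Wt + c) + R)" using WvWu ex(1) by (simp add: mult_left_mono)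
    also have "\<dots> \<le> ev * (l * (- a * Wt + c)) + E * R" using mult_right_mono[OF ex(2) R0] by (simp add: algebra_simps)
    finally show ?thesis .
  qed
  have split3: "ev * (Wv - c / a) - eu * (Wu' - c / a) = ev * (Wv - Wu') + l * a * e\<theta> * (Wu' - c / a)"
    using ex(7) by (simp add: algebra_simps)
  have key: "ev * (l * (- a * Wt + c)) + l * a * e\<theta> * (Wu' - c / a) = l * (a * (e\<theta> * (Wu' - Wt) + (e\<theta> - ev) * Wt) + c * (ev - e\<theta>))"
    using a by (simp add: field_simps)
  have k1: "e\<theta> * (Wu' - Wt) \<le> E * \<epsilon>"
  proof -
    have "e\<theta> * (Wu' - Wt) \<le> e\<theta> * \<epsilon>" using Wu ex(3) unfolding Wu'_def Wt_def by (simp add: mult_left_mono)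
    also have "\<dots> \<le> E * \<epsilon>" using ex(4) eps by (simp add: mult_right_mono)
    finally show ?thesis .
  qed
  have dth: "\<bar>e\<theta> - ev\<bar> \<le> 2 * \<epsilon>" using ex(5,6) by linarith
  have k2: "(e\<theta> - ev) * Wt \<le> 2 * \<epsilon> * BW"
  proof -
    have "(e\<theta> - ev) * Wt \<le> \<bar>e\<theta> - ev\<bar> * \<bar>Wt\<bar>" by (metis abs_ge_self abs_mult)
    also have "\<dots> \<le> (2 * \<epsilon>) * BW" using dth BW unfolding Wt_def by (intro mult_mono) auto
    finally show ?thesis .
  qed
  have k3: "c * (ev - e\<theta>) \<le> c * (2 * \<epsilon>)" using dth c by (intro mult_left_mono) auto
  have inner_b: "a * (e\<theta> * (Wu' - Wt) + (e\<theta> - ev) * Wt) + c * (ev - e\<theta>) \<le> \<epsilon> * (a * (E + 2 * BW) + 2 * c)"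
  proof -
    have "a * (e\<theta> * (Wu' - Wt) + (e\<theta> - ev) * Wt) \<le> a * (E * \<epsilon> + 2 * \<epsilon> * BW)"
      using k1 k2 a by (intro mult_left_mono) auto
    then show ?thesis using k3 by (simp add: algebra_simps)
  qed
  have "ev * (Wv - c / a) - eu * (Wu' - c / a) \<le> l * (\<epsilon> * (a * (E + 2 * BW) + 2 * c)) + E * R"
    using split3 st1 key mult_left_mono[OF inner_b l] by linarith
  also have "\<dots> = l * \<epsilon> * (a * (E + 2 * BW) + 2 * c + 4 * E * nQ) + E * (2 * BX * nQ + 4 * nQ) * norm er"
    unfolding R_def by (simp add: algebra_simps)
  finally show ?thesis unfolding Wv_def Wu'_def er_def \<Delta>_def .
qed



lemma le_eps_zero:
  fixes x K :: real
  assumes K: "K \<ge> 0" and h: "\<And>\<epsilon>. \<epsilon> > 0 \<Longrightarrow> x \<le> \<epsilon> * K"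
  shows "x \<le> 0"
proof (rule ccontr)
  assume "\<not> x \<le> 0"
  then have x: "x > 0" by simp
  define \<epsilon> where "\<epsilon> = x / (2 * (K + 1))"
  have e: "\<epsilon> > 0" unfolding \<epsilon>_def using x K by simp
  have "x \<le> \<epsilon> * K" using h[OF e] .
  also have "\<dots> \<le> \<epsilon> * (K + 1)" using e by simp
  also have "\<dots> = x / 2" unfolding \<epsilon>_def using K by (simp add: field_simps)
  finally show False using x by simp
qed

lemma comparison:
  fixes X F :: "real \<Rightarrow> real^'k" and Q :: "real^'k^'k"
  assumes Qsym: "transpose Q = Q" and a: "a > 0" and c: "c \<ge> 0" and t: "t > 0"
    and int: "\<And>u. 0 \<le> u \<Longrightarrow> u \<le> t \<Longrightarrow> (F has_integral (X u - X 0)) {0..u}"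
    and ineq: "\<And>s. 0 \<le> s \<Longrightarrow> s \<le> t \<Longrightarrow> 2 * (X s \<bullet> (Q *v F s)) \<le> - a * (X s \<bullet> (Q *v X s)) + c"
  shows "exp (a * t) * (X t \<bullet> (Q *v X t) - c / a) \<le> X 0 \<bullet> (Q *v X 0) - c / a"
proof -
  define W where "W s = X s \<bullet> (Q *v X s)" for s
  define H where "H s = exp (a * s) * (W s - c / a)" for s
  have Fint: "F integrable_on {0..t}" using int[of t] t by auto
  have intu: "\<And>u. 0 \<le> u \<Longrightarrow> u \<le> t \<Longrightarrow> integral {0..u} F = X u - X 0"
    using int by (blast intro: integral_unique)
  have intg: "integral {u..v} F = X v - X u" if "0 \<le> u" "u \<le> v" "v \<le> t" for u v
  proof -
    have Fv: "F integrable_on {0..v}" using Fint that by (intro integrable_on_subinterval[OF Fint]) auto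
    have "integral {0..u} F + integral {u..v} F = integral {0..v} F"
      using Henstock_Kurzweil_Integration.integral_combine[OF that(1,2) Fv] .
    then show ?thesis using intu[of u] intu[of v] that by (simp add: algebra_simps)
  qed
  have Xc: "continuous_on {0..t} X"
  proof (rule continuous_on_eq)
    show "continuous_on {0..t} (\<lambda>s. X 0 + integral {0..s} F)"
      by (intro continuous_on_add continuous_on_const indefinite_integral_continuous_1[OF Fint])
    show "\<And>s. s \<in> {0..t} \<Longrightarrow> X 0 + integral {0..s} F = X s" using intu by auto
  qed
  have QXc: "continuous_on {0..t} (\<lambda>s. Q *v X s)"
    using continuous_on_compose2[OF matrix_vector_mult_linear_continuous_on[of UNIV Q] Xc] by simp
  have Wc: "continuous_on {0..t} W" unfolding W_def
    by (intro continuous_on_inner Xc QXc)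
  have Ec: "continuous_on {0..t} (\<lambda>s. exp (a * s))" by (intro continuous_intros)
  obtain BX where BX: "\<And>s. s \<in> {0..t} \<Longrightarrow> norm (X s) \<le> BX"
  proof -
    have "compact (X ` {0..t})" by (rule compact_continuous_image[OF Xc compact_Icc])
    then have "bounded (X ` {0..t})" by (rule compact_imp_bounded)
    then show ?thesis using that unfolding bounded_iff by blast
  qed
  have BX0: "BX \<ge> 0" using BX[of 0] t by (auto intro: order_trans[OF norm_ge_zero])
  obtain nQ where nQpos: "nQ > 0" and nQ: "\<And>v. norm (Q *v v) \<le> nQ * norm v"
    using bounded_linear.pos_bounded[OF matrix_vector_mul_bounded_linear[of Q]]
    by (metis mult.commute)
  define BW where "BW = nQ * (BX * BX)"
  have BW: "\<bar>W s\<bar> \<le> BW" if "s \<in> {0..t}" for s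
  proof -
    have "\<bar>W s\<bar> \<le> nQ * (norm (X s) * norm (X s))" unfolding W_def by (rule inner_Q_bound[OF nQ])
    also have "\<dots> \<le> nQ * (BX * BX)" using BX[OF that] nQpos BX0 by (intro mult_left_mono mult_mono) auto
    finally show ?thesis unfolding BW_def .
  qed
  have BW0: "BW \<ge> 0" unfolding BW_def using nQpos BX0 by simp
  define E where "E = exp (a * t)"
  define C1 where "C1 = a * (E + 2 * BW) + 2 * c + 4 * E * nQ"
  define C2 where "C2 = E * (2 * BX * nQ + 4 * nQ)"
  have E0: "E > 0" unfolding E_def by simp
  have C10: "C1 \<ge> 0" unfolding C1_def using a E0 BW0 c nQpos by (intro add_nonneg_nonneg mult_nonneg_nonneg) auto
  have C20: "C2 \<ge> 0" unfolding C2_def using E0 BX0 nQpos by (intro mult_nonneg_nonneg add_nonneg_nonneg) auto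
  have main: "H t - H 0 \<le> \<epsilon> * (C1 * t + C2)" if e: "\<epsilon> > 0" for \<epsilon>
  proof -
    have Fint': "F integrable_on cbox 0 t" using Fint by (simp add: cbox_interval)
    obtain g1 where g1: "gauge g1" and hs: "\<And>p. p tagged_partial_division_of cbox 0 t \<Longrightarrow> g1 fine p \<Longrightarrow>
        (\<Sum>(x,k)\<in>p. norm (Henstock_Kurzweil_Integration.content k *\<^sub>R F x - integral k F)) < \<epsilon>"
      using Henstock_lemma[OF Fint' e] by blast
    define \<eta> where "\<eta> \<tau> = min 1 (\<epsilon> / (1 + norm (F \<tau>)))" for \<tau>
    have \<eta>pos: "\<eta> \<tau> > 0" for \<tau> unfolding \<eta>_def using e by (simp add: add_pos_nonneg)
    have \<eta>F: "\<eta> \<tau> * norm (F \<tau>) \<le> \<epsilon>" for \<tau>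
    proof -
      have "\<eta> \<tau> * norm (F \<tau>) \<le> (\<epsilon> / (1 + norm (F \<tau>))) * norm (F \<tau>)"
        unfolding \<eta>_def by (intro mult_right_mono) auto
      also have "\<dots> \<le> (\<epsilon> / (1 + norm (F \<tau>))) * (1 + norm (F \<tau>))"
        using e by (intro mult_left_mono) auto
      also have "\<dots> = \<epsilon>"
        using add_pos_nonneg[OF zero_less_one norm_ge_zero[of "F \<tau>"]] by simp
      finally show ?thesis .
    qed
    have \<eta>1: "\<eta> \<tau> \<le> 1" for \<tau> unfolding \<eta>_def by simp
    have loc: "\<exists>d>0. \<tau> \<in> {0..t} \<longrightarrow> (\<forall>s\<in>{0..t}. dist s \<tau> < d \<longrightarrow>
        norm (X s - X \<tau>) \<le> \<eta> \<tau> \<and> \<bar>exp (a * s) - exp (a * \<tau>)\<bar> \<le> \<epsilon> \<and> \<bar>W s - W \<tau>\<bar> \<le> \<epsilon>)" for \<tau>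
    proof (cases "\<tau> \<in> {0..t}")
      case True
      obtain d1 where d1: "d1 > 0" "\<forall>s\<in>{0..t}. dist s \<tau> < d1 \<longrightarrow> dist (X s) (X \<tau>) < \<eta> \<tau>"
        using Xc True \<eta>pos unfolding continuous_on_iff by metis
      obtain d2 where d2: "d2 > 0" "\<forall>s\<in>{0..t}. dist s \<tau> < d2 \<longrightarrow> dist (exp (a * s)) (exp (a * \<tau>)) < \<epsilon>"
        using Ec True e unfolding continuous_on_iff by metis
      obtain d3 where d3: "d3 > 0" "\<forall>s\<in>{0..t}. dist s \<tau> < d3 \<longrightarrow> dist (W s) (W \<tau>) < \<epsilon>"
        using Wc True e unfolding continuous_on_iff by metis
      show ?thesis
        apply (rule exI[of _ "min d1 (min d2 d3)"])
        using d1 d2 d3 by (auto simp: dist_norm dist_real_def less_imp_le)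
    qed (auto intro: exI[of _ 1])
    then obtain \<delta> where \<delta>pos: "\<And>\<tau>. \<delta> \<tau> > 0" and \<delta>: "\<And>\<tau> s. \<tau> \<in> {0..t} \<Longrightarrow> s \<in> {0..t} \<Longrightarrow> dist s \<tau> < \<delta> \<tau> \<Longrightarrow>
        norm (X s - X \<tau>) \<le> \<eta> \<tau> \<and> \<bar>exp (a * s) - exp (a * \<tau>)\<bar> \<le> \<epsilon> \<and> \<bar>W s - W \<tau>\<bar> \<le> \<epsilon>"
      by metis
    define g where "g \<tau> = g1 \<tau> \<inter> ball \<tau> (\<delta> \<tau>)" for \<tau>
    have gg: "gauge g" unfolding g_def using g1 gauge_ball_dependent \<delta>pos by (intro gauge_Int) auto
    obtain p where p: "p tagged_division_of {0..t}" and gp: "g fine p"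
      using fine_division_exists_real[OF gg] by metis
    have g1p: "g1 fine p" and g2p: "(\<lambda>\<tau>. ball \<tau> (\<delta> \<tau>)) fine p"
      using gp unfolding g_def fine_Int by auto
    have hsp: "(\<Sum>(x,k)\<in>p. norm (Henstock_Kurzweil_Integration.content k *\<^sub>R F x - integral k F)) < \<epsilon>"
      using hs[OF _ g1p] p unfolding tagged_division_of_def cbox_interval by blast
    have elem: "H (Sup K) - H (Inf K) \<le> \<epsilon> * C1 * (Sup K - Inf K) + C2 * norm (Henstock_Kurzweil_Integration.content K *\<^sub>R F \<tau> - integral K F)"
      if tk: "(\<tau>, K) \<in> p" for \<tau> K
    proof -
      have \<tau>K: "\<tau> \<in> K" and Ksub: "K \<subseteq> {0..t}" using p tk by auto
      obtain u v where Kuv: "K = cbox u v" using p tk by (meson tagged_division_ofD(4))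
      then have Kuv': "K = {u..v}" by (simp add: cbox_interval)
      have Kb: "K \<subseteq> ball \<tau> (\<delta> \<tau>)" using g2p tk unfolding fine_def by auto
      have uv: "u \<le> \<tau>" "\<tau> \<le> v" using \<tau>K Kuv' by auto
      have u0: "0 \<le> u" and vt: "v \<le> t" using Ksub Kuv' uv by auto
      have \<tau>in: "\<tau> \<in> {0..t}" using \<tau>K Ksub by auto
      have uin: "u \<in> {0..t}" and vin: "v \<in> {0..t}" using u0 vt uv by auto
      have du: "dist u \<tau> < \<delta> \<tau>" and dv: "dist v \<tau> < \<delta> \<tau>"
      proof -
        have "u \<in> K" "v \<in> K" using Kuv' uv by auto
        then have "u \<in> ball \<tau> (\<delta> \<tau>)" "v \<in> ball \<tau> (\<delta> \<tau>)" using Kb by auto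
        then show "dist u \<tau> < \<delta> \<tau>" "dist v \<tau> < \<delta> \<tau>" by (auto simp: dist_commute)
      qed
      have SI: "Sup K = v" "Inf K = u" using Kuv' uv by auto
      have cK: "Henstock_Kurzweil_Integration.content K = v - u" using Kuv' uv by simp
      have iK: "integral K F = X v - X u" using intg[OF u0 _ vt] uv Kuv' by simp
      obtain \<theta> where th: "u \<le> \<theta>" "\<theta> \<le> v" and mvt: "exp (a * v) - exp (a * u) = (v - u) * a * exp (a * \<theta>)"
      proof (cases "u < v")
        case True
        have "\<exists>z. u < z \<and> z < v \<and> exp (a * v) - exp (a * u) = (v - u) * (exp (a * z) * a)"
          by (rule MVT2[OF True]) (auto intro!: derivative_eq_intros)
        then obtain z where "u < z" "z < v" "exp (a * v) - exp (a * u) = (v - u) * (exp (a * z) * a)" by blast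
        then show ?thesis using that[of z] by (simp add: mult_ac)
      next
        case False
        then have "u = v" using uv by simp
        then show ?thesis using that[of u] by simp
      qed
      have thin: "\<theta> \<in> {0..t}" using th u0 vt by auto
      have dth: "dist \<theta> \<tau> < \<delta> \<tau>" using du dv th uv by (auto simp: dist_real_def)
      have lu: "norm (X u - X \<tau>) \<le> \<eta> \<tau>" "\<bar>W u - W \<tau>\<bar> \<le> \<epsilon>" using \<delta>[OF \<tau>in uin du] by auto
      have lv: "norm (X v - X \<tau>) \<le> \<eta> \<tau>" "\<bar>exp (a * v) - exp (a * \<tau>)\<bar> \<le> \<epsilon>" using \<delta>[OF \<tau>in vin dv] by auto
      have lth: "\<bar>exp (a * \<theta>) - exp (a * \<tau>)\<bar> \<le> \<epsilon>" using \<delta>[OF \<tau>in thin dth] by auto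
      have evE: "exp (a * v) \<le> E" unfolding E_def using vt a by simp
      have ethE: "exp (a * \<theta>) \<le> E" unfolding E_def using th vt a by simp
      have est: "exp (a * v) * (X v \<bullet> (Q *v X v) - c / a) - exp (a * u) * (X u \<bullet> (Q *v X u) - c / a)
         \<le> (v - u) * \<epsilon> * (a * (E + 2 * BW) + 2 * c + 4 * E * nQ) + E * (2 * BX * nQ + 4 * nQ) * norm (X v - X u - (v - u) *\<^sub>R F \<tau>)"
      proof (rule elem_est[where ev="exp (a * v)" and eu="exp (a * u)" and e\<theta>="exp (a * \<theta>)"
             and e\<tau>="exp (a * \<tau>)" and E=E and BW=BW and l="v - u" and \<eta>="\<eta> \<tau>"])
        show "2 * (X \<tau> \<bullet> (Q *v F \<tau>)) \<le> - a * (X \<tau> \<bullet> (Q *v X \<tau>)) + c" using ineq \<tau>in by auto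
        show "norm (X \<tau>) \<le> BX" using BX \<tau>in by auto
        show "\<bar>X \<tau> \<bullet> (Q *v X \<tau>)\<bar> \<le> BW" using BW[OF \<tau>in] unfolding W_def .
        show "\<bar>X u \<bullet> (Q *v X u) - X \<tau> \<bullet> (Q *v X \<tau>)\<bar> \<le> \<epsilon>" using lu(2) unfolding W_def .
      qed (use Qsym nQ nQpos uv a c lu(1) lv evE ethE lth mvt \<eta>1 \<eta>F \<eta>pos in auto)
      have nn: "norm (X v - X u - (v - u) *\<^sub>R F \<tau>) = norm (Henstock_Kurzweil_Integration.content K *\<^sub>R F \<tau> - integral K F)"
        unfolding cK iK by (simp add: norm_minus_commute)
      show ?thesis using est unfolding SI H_def W_def nn C1_def C2_def by (simp add: mult_ac)
    qed
    have sumeq: "(\<Sum>(\<tau>,K)\<in>p. H (Sup K) - H (Inf K)) = H t - H 0"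
      using additive_tagged_division_1[OF less_imp_le[OF t] p, of H] by simp
    have sumc: "(\<Sum>(\<tau>,K)\<in>p. Sup K - Inf K) = t"
      using additive_tagged_division_1[OF less_imp_le[OF t] p, of "\<lambda>x. x"] by simp
    have "H t - H 0 \<le> (\<Sum>(\<tau>,K)\<in>p. \<epsilon> * C1 * (Sup K - Inf K) + C2 * norm (Henstock_Kurzweil_Integration.content K *\<^sub>R F \<tau> - integral K F))"
      unfolding sumeq[symmetric] by (rule sum_mono) (use elem in auto)
    also have "\<dots> = \<epsilon> * C1 * (\<Sum>(\<tau>,K)\<in>p. Sup K - Inf K) + C2 * (\<Sum>(\<tau>,K)\<in>p. norm (Henstock_Kurzweil_Integration.content K *\<^sub>R F \<tau> - integral K F))"
      by (simp add: split_def sum.distrib sum_distrib_left)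
    also have "\<dots> \<le> \<epsilon> * C1 * t + C2 * \<epsilon>"
      unfolding sumc using hsp C20 by (simp add: mult_left_mono less_imp_le)
    finally show ?thesis by (simp add: algebra_simps)
  qed
  have "H t - H 0 \<le> 0"
    by (rule le_eps_zero[of "C1 * t + C2"]) (use main C10 C20 t in auto)
  then show ?thesis unfolding H_def W_def by simp
qed



lemma mult_from_dMM:
  fixes p :: "real^'nq \<Rightarrow> real^'np"
  assumes "dMM p (transpose (blk2 T11 T12 T13 T14) ** blk2 X 0 0 (- Y) ** blk2 T11 T12 T13 T14)"
  shows "(T11 *v (q2 - q1) + T12 *v (p q2 - p q1)) \<bullet> (X *v (T11 *v (q2 - q1) + T12 *v (p q2 - p q1)))
        - (T13 *v (q2 - q1) + T14 *v (p q2 - p q1)) \<bullet> (Y *v (T13 *v (q2 - q1) + T14 *v (p q2 - p q1))) \<ge> 0"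
proof -
  define v where "v = vjoin (q2 - q1) (p q2 - p q1)"
  have "v \<bullet> ((transpose (blk2 T11 T12 T13 T14) ** blk2 X 0 0 (- Y) ** blk2 T11 T12 T13 T14) *v v) \<ge> 0"
    using assms unfolding dMM_def v_def by blast
  also have "v \<bullet> ((transpose (blk2 T11 T12 T13 T14) ** blk2 X 0 0 (- Y) ** blk2 T11 T12 T13 T14) *v v)
     = (blk2 T11 T12 T13 T14 *v v) \<bullet> (blk2 X 0 0 (- Y) *v (blk2 T11 T12 T13 T14 *v v))"
    by (simp only: matrix_vector_mul_assoc[symmetric] tr_inner)
  finally show ?thesis unfolding v_def blk2_mult
    by (simp add: vjoin_inner neg_mv)
qed

lemma pdef_lower:
  fixes P :: "real^'n^'n"
  assumes "pdef P"
  obtains m where "m > 0" "\<And>v. v \<bullet> (P *v v) \<ge> m * (norm v)\<^sup>2"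
proof -
  define S where "S = {v :: real^'n. norm v = 1}"
  have cS: "compact S" unfolding S_def
    using compact_sphere[of "0::real^'n" 1] by (simp add: sphere_def dist_norm)
  have neS: "S \<noteq> {}" unfolding S_def using norm_axis_1 by blast
  have cont: "continuous_on S (\<lambda>v. v \<bullet> (P *v v))"
    by (intro continuous_intros continuous_on_compose2[OF matrix_vector_mult_linear_continuous_on[of UNIV P]]) auto
  obtain v0 where v0: "v0 \<in> S" "\<And>y. y \<in> S \<Longrightarrow> v0 \<bullet> (P *v v0) \<le> y \<bullet> (P *v y)"
    using continuous_attains_inf[OF cS neS cont] by blast
  have v00: "v0 \<noteq> 0" using v0(1) unfolding S_def by auto
  have mpos: "v0 \<bullet> (P *v v0) > 0" using assms v00 unfolding pdef_def by blast
  show ?thesis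
  proof (rule that[OF mpos])
    fix v :: "real^'n"
    show "v \<bullet> (P *v v) \<ge> v0 \<bullet> (P *v v0) * (norm v)\<^sup>2"
    proof (cases "v = 0")
      case True then show ?thesis by simp
    next
      case False
      define u where "u = (1 / norm v) *\<^sub>R v"
      have uS: "u \<in> S" unfolding S_def u_def using False by simp
      have vu: "v = norm v *\<^sub>R u" unfolding u_def using False by simp
      have "v \<bullet> (P *v v) = (norm v)\<^sup>2 * (u \<bullet> (P *v u))"
        by (subst (1 2) vu) (simp add: matrix_vector_mult_scaleR power2_eq_square)
      also have "\<dots> \<ge> (norm v)\<^sup>2 * (v0 \<bullet> (P *v v0))" using v0(2)[OF uS] by (simp add: mult_left_mono)
      finally show ?thesis by (simp add: mult_ac)
    qed
  qed
qed

lemma transpose_blk2: "transpose (blk2 A B C D) = blk2 (transpose A) (transpose C) (transpose B) (transpose D)"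
  by (simp add: vec_eq_iff transpose_def blk2_def vcat_def hcat_def split: sum.split)

lemma exp_decay: "b > 0 \<Longrightarrow> ((\<lambda>t. exp (- (b * t))) \<longlongrightarrow> (0::real)) at_top"
proof -
  assume b: "b > 0"
  have "filterlim (\<lambda>t::real. b * t) at_top at_top"
    by (rule filterlim_tendsto_pos_mult_at_top[OF tendsto_const b filterlim_ident])
  then have "filterlim (\<lambda>t::real. - (b * t)) at_bot at_top"
    by (rule filterlim_compose[OF filterlim_uminus_at_bot_at_top])
  then show ?thesis by (rule filterlim_compose[OF exp_at_bot])
qed

lemma KL_example:
  assumes b1: "b1 > 0" and b: "b > 0"
  shows "classKL (\<lambda>r t. b1 * r * exp (- (b * t)))"
  unfolding classKL_def classK_def
proof (intro conjI allI impI)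
  fix t :: real
  show "b1 * 0 * exp (- (b * t)) = 0" by simp
  show "continuous_on {0..} (\<lambda>r. b1 * r * exp (- (b * t)))" by (intro continuous_intros)
  show "strict_mono_on {0..} (\<lambda>r. b1 * r * exp (- (b * t)))"
    by (rule strict_mono_onI) (use b1 in simp)
next
  fix r s t :: real assume r: "0 \<le> r" and "0 \<le> s" "s \<le> t"
  then show "b1 * r * exp (- (b * t)) \<le> b1 * r * exp (- (b * s))"
    using b1 b by (auto intro!: mult_left_mono)
next
  fix r :: real assume r: "0 \<le> r"
  show "((\<lambda>t. b1 * r * exp (- (b * t))) \<longlongrightarrow> 0) at_top"
    using tendsto_mult_left_zero[OF exp_decay[OF b], of "b1 * r"] by (simp add: mult.commute)
qed

lemma K_example: "b2 > 0 \<Longrightarrow> classK (\<lambda>s. b2 * s)"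
  unfolding classK_def by (auto intro!: continuous_intros strict_mono_onI)



lemma hi_mv: "(f has_integral y) S \<Longrightarrow> ((\<lambda>s. M *v f s) has_integral (M *v y)) S"
  for f :: "real \<Rightarrow> real^'n" and M :: "real^'n^'m"
  using has_integral_linear[OF _ matrix_vector_mul_bounded_linear[of M], of f y S] by (simp add: o_def)

lemma vjoin_as: "vjoin a b = vcat (mat 1) 0 *v a + vcat 0 (mat 1) *v b"
  by (simp add: vcat_mult vjoin_add)

lemma young: fixes x y e :: real assumes "e > 0" shows "2 * x * y \<le> e * x\<^sup>2 + y\<^sup>2 / e"
proof -
  have "0 \<le> (e * x - y)\<^sup>2" by simp
  then have "2 * e * x * y \<le> e\<^sup>2 * x\<^sup>2 + y\<^sup>2" by (simp add: power2_eq_square algebra_simps)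
  then have "2 * x * y \<le> (e\<^sup>2 * x\<^sup>2 + y\<^sup>2) / e" using assms by (simp add: pos_le_divide_eq mult_ac)
  also have "\<dots> = e * x\<^sup>2 + y\<^sup>2 / e" using assms by (simp add: field_simps power2_eq_square)
  finally show ?thesis .
qed

lemma mat_bound: fixes M :: "real^'n^'m" obtains n where "n > 0" "\<And>v. norm (M *v v) \<le> n * norm v"
  using bounded_linear.pos_bounded[OF matrix_vector_mul_bounded_linear[of M]] by (metis mult.commute)

lemma pdef_sym_inv: "pdef P \<Longrightarrow> transpose P = P \<and> invertible P"
  using pdef_invertible unfolding pdef_def by blast

lemma pdef_nonneg: "pdef P \<Longrightarrow> v \<bullet> (P *v v) \<ge> 0"
  unfolding pdef_def by (cases "v = 0") (auto intro: less_imp_le)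

lemma transpose_zero': "transpose (0::real^'n^'m) = 0"
  by (simp add: vec_eq_iff transpose_def)

theorem corollary2:
  fixes A :: "real^'nx^'nx" and B :: "real^'nu^'nx" and E :: "real^'np^'nx"
    and Ew :: "real^'nw^'nx" and C :: "real^'nx^'ny" and D :: "real^'nu^'ny"
    and Fw :: "real^'nw^'ny" and Cq :: "real^'nx^'nq"
    and p :: "real^'nq \<Rightarrow> real^'np"
    and N1 N2 :: "((real^'nq^'nq) \<times> (real^'np^'np)) set"
    and T11 T21 :: "real^'nq^'nq" and T12 T22 :: "real^'np^'nq"
    and T13 T23 :: "real^'nq^'np" and T14 T24 :: "real^'np^'np"
    and \<alpha>1 \<alpha>2 \<mu>1 \<mu>2 :: real
    and R1 :: "real^'ny^'nx" and R2 :: "real^'ny^'nq" and R3 :: "real^'nx^'nu"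
    and R4 :: "real^'np^'nu"
    and P1 P2 :: "real^'nx^'nx"
    and X1 X2 :: "real^'nq^'nq" and Y1 Y2 :: "real^'np^'np"
    and At1 At2 :: "real^'nx^'nx" and Et1 Et2 :: "real^'np^'nx"
    and Gam11 Gam21 :: "real^'nq^'nq" and Gam12 Gam22 :: "real^'np^'nq"
    and L1 :: "real^'ny^'nq" and L2 :: "real^'ny^'nx" and K1 :: "real^'nx^'nu"
  assumes p0: "p 0 = 0"
    (* condition (i) *)
    and N1_sym: "\<forall>(X, Y)\<in>N1. transpose X = X \<and> transpose Y = Y"
    and T1_inv: "invertible (blk2 T11 T12 T13 T14)" and T14_inv: "invertible T14"
    and cond_i: "\<forall>(X, Y)\<in>N1. dMM p (transpose (blk2 T11 T12 T13 T14)
                    ** blk2 X 0 0 (- Y) ** blk2 T11 T12 T13 T14)"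
    (* condition (ii) *)
    and N2_sym: "\<forall>(X, Y)\<in>N2. transpose X = X \<and> transpose Y = Y \<and> invertible X \<and> invertible Y"
    and T2_inv: "invertible (blk2 T21 T22 T23 T24)" and T24_inv: "invertible T24"
    and cond_ii: "\<forall>(X, Y)\<in>N2. dMM p (transpose (blk2 T21 T22 T23 T24)
                    ** blk2 (matrix_inv X) 0 0 (- matrix_inv Y) ** blk2 T21 T22 T23 T24)"
    (* condition (iii) *)
    and pos: "\<alpha>1 > 0" "\<alpha>2 > 0" "\<mu>1 > 0" "\<mu>2 > 0"
    and P1_pd: "pdef P1" and P2_pd: "pdef P2"
    and X1_pd: "pdef X1" and Y1_sym: "transpose Y1 = Y1"
    and X2_pd: "pdef X2" and Y2_pd: "pdef Y2"
    and XY1: "(X1, Y1) \<in> N1" and XY2: "(X2, Y2) \<in> N2"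
    and At1_def: "At1 = A - E ** matrix_inv T14 ** T13 ** Cq"
    and At2_def: "At2 = A - E ** matrix_inv T24 ** T23 ** Cq"
    and Et1_def: "Et1 = E ** matrix_inv T14"
    and Et2_def: "Et2 = E ** matrix_inv T24"
    and Gam11_def: "Gam11 = T11 - T12 ** matrix_inv T14 ** T13"
    and Gam21_def: "Gam21 = T21 - T22 ** matrix_inv T24 ** T23"
    and Gam12_def: "Gam12 = T12 ** matrix_inv T14"
    and Gam22_def: "Gam22 = T22 ** matrix_inv T24"
    and LMI1: "nsd (let
        Phi0 = transpose At1 ** P1 + P1 ** At1 + transpose C ** transpose R1 + R1 ** C + \<alpha>1 *\<^sub>R P1;
        Phi = blk2 (blk2 Phi0 (- (P1 ** Et1)) (transpose (- (P1 ** Et1))) (0 :: real^'np^'np))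
                   (vcat (P1 ** Ew + R1 ** Fw) (0 :: real^'nw^'np))
                   (transpose (vcat (P1 ** Ew + R1 ** Fw) (0 :: real^'nw^'np)))
                   (- (\<mu>1 *\<^sub>R mat 1 :: real^'nw^'nw));
        vphi = hcat (hcat (0 :: real^'nx^'np) (mat 1 :: real^'np^'np)) (0 :: real^'nw^'np);
        phi = hcat (hcat (- (X1 ** Gam11 ** Cq + R2 ** C)) (X1 ** Gam12)) (- (R2 ** Fw))
      in blk2 (Phi - transpose vphi ** Y1 ** vphi) (transpose phi) phi (- X1))"
    and LMI2: "nsd (let
        Psi0 = At2 ** P2 + P2 ** transpose At2 + B ** R3 + transpose R3 ** transpose B + \<alpha>2 *\<^sub>R P2;
        Psi = blk2 (blk2 Psi0 (Et2 ** Y2 + B ** R4) (transpose (Et2 ** Y2 + B ** R4)) (0 :: real^'np^'np))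
                   (vcat Ew (0 :: real^'nw^'np))
                   (transpose (vcat Ew (0 :: real^'nw^'np)))
                   (- (\<mu>2 *\<^sub>R mat 1 :: real^'nw^'nw));
        vphi = hcat (hcat (0 :: real^'nx^'np) (mat 1 :: real^'np^'np)) (0 :: real^'nw^'np);
        psi = hcat (hcat (Gam21 ** Cq ** P2) (Gam22 ** Y2)) (0 :: real^'nw^'nq)
      in blk2 (Psi - transpose vphi ** Y2 ** vphi) (transpose psi) psi (- X2))"
    (* choice R4 = 0 and the gains *)
    and R4_zero: "R4 = 0"
    and Gam11_inv: "invertible Gam11"
    and L1_def: "L1 = matrix_inv Gam11 ** matrix_inv X1 ** R2"
    and L2_def: "L2 = matrix_inv P1 ** R1 + E ** matrix_inv T14 ** T13 ** L1"
    and K1_def: "K1 = R3 ** matrix_inv P2"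
  shows "closed_loop_ISS A B C D E Ew Fw Cq p L1 L2 K1"
proof -
  have P1p: "transpose P1 = P1" "invertible P1" using pdef_sym_inv[OF P1_pd] by auto
  have P2p: "transpose P2 = P2" "invertible P2" using pdef_sym_inv[OF P2_pd] by auto
  have X1i: "invertible X1" using pdef_sym_inv[OF X1_pd] by auto
  have X2i: "invertible X2" using pdef_sym_inv[OF X2_pd] by auto
  have Y2i: "invertible Y2" using pdef_sym_inv[OF Y2_pd] by auto
  have dm1: "dMM p (transpose (blk2 T11 T12 T13 T14) ** blk2 X1 0 0 (- Y1) ** blk2 T11 T12 T13 T14)"
    using bspec[OF cond_i XY1] by simp
  have dm2: "dMM p (transpose (blk2 T21 T22 T23 T24) ** blk2 (matrix_inv X2) 0 0 (- matrix_inv Y2) ** blk2 T21 T22 T23 T24)"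
    using bspec[OF cond_ii XY2] by simp
  note mult1 = mult_from_dMM[OF dm1]
  note mult2 = mult_from_dMM[OF dm2]
  note obs = obs_ineq[OF T14_inv P1p(2) P1p(1) X1i Gam11_inv mult1 At1_def Et1_def Gam11_def Gam12_def LMI1 L1_def L2_def]
  note plant = plant_ineq[OF T24_inv P2p(2) P2p(1) X2i Y2i p0 mult2 At2_def Et2_def Gam21_def Gam22_def LMI2 R4_zero K1_def]
  obtain m1 where m1: "m1 > 0" "\<And>v. v \<bullet> (P1 *v v) \<ge> m1 * (norm v)\<^sup>2" using pdef_lower[OF P1_pd] by blast
  obtain m2 where m2: "m2 > 0" "\<And>v. v \<bullet> (P2 *v v) \<ge> m2 * (norm v)\<^sup>2" using pdef_lower[OF P2_pd] by blast
  obtain nB where nB: "nB > 0" "\<And>v. norm ((B ** K1) *v v) \<le> nB * norm v" using mat_bound by blast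
  obtain nP1 where nP1: "nP1 > 0" "\<And>v. norm (P1 *v v) \<le> nP1 * norm v" using mat_bound by blast
  obtain nP2 where nP2: "nP2 > 0" "\<And>v. norm (P2 *v v) \<le> nP2 * norm v" using mat_bound by blast
  obtain nPi where nPi: "nPi > 0" "\<And>v. norm (matrix_inv P2 *v v) \<le> nPi * norm v" using mat_bound by blast
  have V1nn: "\<And>v. v \<bullet> (P1 *v v) \<ge> 0" using pdef_nonneg[OF P1_pd] .
  have V2nn: "\<And>v. v \<bullet> (P2 *v v) \<ge> 0" using pdef_nonneg[OF P2_pd] .
  define c3 where "c3 = 2 * nB\<^sup>2 / (\<alpha>2 * m2 * m1)"
  define k where "k = 2 * c3 / \<alpha>1 + 1"
  define a where "a = min \<alpha>1 \<alpha>2 / 2"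
  define cw where "cw = \<mu>2 + k * \<mu>1"
  define Q where "Q = blk2 P2 (0::real^'nx^'nx) (0::real^'nx^'nx) (k *\<^sub>R P1)"
  have c3pos: "c3 \<ge> 0" unfolding c3_def using pos m1 m2 by simp
  have kpos: "k > 0" unfolding k_def using c3pos pos by (simp add: add_nonneg_pos)
  have apos: "a > 0" unfolding a_def using pos by simp
  have cwpos: "cw \<ge> 0" unfolding cw_def using pos kpos by simp
  have a2: "a \<le> \<alpha>2 / 2" "a \<le> \<alpha>1 / 2" unfolding a_def by auto
  have ka: "a * k + c3 \<le> k * \<alpha>1"
  proof -
    have f1: "a * k \<le> \<alpha>1 / 2 * k" using a2 kpos by (simp add: mult_right_mono)
    have f2: "\<alpha>1 / 2 * k = c3 + \<alpha>1 / 2" unfolding k_def using pos by (simp add: field_simps)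
    have f3: "k * \<alpha>1 = 2 * c3 + \<alpha>1" unfolding k_def using pos by (simp add: field_simps)
    show ?thesis using f1 f2 f3 c3pos pos by linarith
  qed
  have Qsym: "transpose Q = Q"
    unfolding Q_def transpose_blk2 by (simp add: transpose_scalar P1p P2p transpose_zero')
  have Qquad: "vjoin u d \<bullet> (Q *v vjoin u' d') = u \<bullet> (P2 *v u') + k * (d \<bullet> (P1 *v d'))" for u u' d d'
    unfolding Q_def blk2_mult vjoin_inner by (simp add: scale_mv)
  have point: "2 * (vjoin (matrix_inv P2 *v x) (xh - x) \<bullet> (Q *v vjoin (matrix_inv P2 *v cl_rhs_x A B E Ew Cq p K1 x xh w)
        (cl_rhs_xh A B C D E Fw Cq p L1 L2 K1 x xh w - cl_rhs_x A B E Ew Cq p K1 x xh w)))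
      \<le> - a * (vjoin (matrix_inv P2 *v x) (xh - x) \<bullet> (Q *v vjoin (matrix_inv P2 *v x) (xh - x))) + cw * (w \<bullet> w)"
    for x xh w
  proof -
    define \<xi> where "\<xi> = matrix_inv P2 *v x"
    define d where "d = xh - x"
    define fx where "fx = cl_rhs_x A B E Ew Cq p K1 x xh w"
    define fxh where "fxh = cl_rhs_xh A B C D E Fw Cq p L1 L2 K1 x xh w"
    define V1 where "V1 = d \<bullet> (P1 *v d)"
    define V2 where "V2 = \<xi> \<bullet> (P2 *v \<xi>)"
    have l1: "vjoin \<xi> d \<bullet> (Q *v vjoin (matrix_inv P2 *v fx) (fxh - fx)) = \<xi> \<bullet> fx + k * (d \<bullet> (P1 *v (fxh - fx)))"
      unfolding Qquad by (simp add: inv_facts[OF P2p(2)])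
    have l2: "vjoin \<xi> d \<bullet> (Q *v vjoin \<xi> d) = V2 + k * V1"
      unfolding Qquad V1_def V2_def ..
    have pl: "2 * (\<xi> \<bullet> fx) \<le> - \<alpha>2 * V2 + \<mu>2 * (w \<bullet> w) + 2 * (\<xi> \<bullet> ((B ** K1) *v d))"
      using plant[where x=x and xh=xh and w=w] unfolding \<xi>_def[symmetric] fx_def[symmetric] V2_def d_def
      by (simp add: matrix_vector_mul_assoc)
    have ob: "2 * (d \<bullet> (P1 *v (fxh - fx))) \<le> - \<alpha>1 * V1 + \<mu>1 * (w \<bullet> w)"
      using obs[where x=x and xh=xh and w=w and B=B and D=D and ?K1.0=K1] unfolding d_def[symmetric] fx_def[symmetric] fxh_def[symmetric] V1_def .
    have cr: "2 * (\<xi> \<bullet> ((B ** K1) *v d)) \<le> \<alpha>2 / 2 * V2 + c3 * V1"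
    proof -
      define e where "e = \<alpha>2 * m2 / 2"
      have e0: "e > 0" unfolding e_def using pos m2 by simp
      have "\<xi> \<bullet> ((B ** K1) *v d) \<le> norm \<xi> * norm ((B ** K1) *v d)" by (rule norm_cauchy_schwarz)
      also have "\<dots> \<le> norm \<xi> * (nB * norm d)" using nB(2) by (simp add: mult_left_mono)
      finally have "2 * (\<xi> \<bullet> ((B ** K1) *v d)) \<le> 2 * norm \<xi> * (nB * norm d)" by simp
      also have "\<dots> \<le> e * (norm \<xi>)\<^sup>2 + (nB * norm d)\<^sup>2 / e" by (rule young[OF e0])
      also have "e * (norm \<xi>)\<^sup>2 \<le> \<alpha>2 / 2 * V2"
      proof -
        have "e * (norm \<xi>)\<^sup>2 = \<alpha>2 / 2 * (m2 * (norm \<xi>)\<^sup>2)" unfolding e_def by simp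
        also have "\<dots> \<le> \<alpha>2 / 2 * V2" unfolding V2_def using m2(2)[of \<xi>] pos by (simp add: mult_left_mono)
        finally show ?thesis .
      qed
      also have "(nB * norm d)\<^sup>2 / e \<le> c3 * V1"
      proof -
        have "(nB * norm d)\<^sup>2 / e = c3 * (m1 * (norm d)\<^sup>2)"
          unfolding c3_def e_def using pos m1 m2 by (simp add: field_simps power2_eq_square)
        also have "\<dots> \<le> c3 * V1" unfolding V1_def using m1(2)[of d] c3pos by (simp add: mult_left_mono)
        finally show ?thesis .
      qed
      finally show ?thesis by simp
    qed
    have V1p: "V1 \<ge> 0" and V2p: "V2 \<ge> 0" unfolding V1_def V2_def using V1nn V2nn by auto
    have r1: "a * V2 \<le> \<alpha>2 / 2 * V2" using mult_right_mono[OF a2(1) V2p] .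
    have r2: "(a * k + c3) * V1 \<le> (k * \<alpha>1) * V1" using ka V1p by (simp add: mult_right_mono)
    have kob: "k * (2 * (d \<bullet> (P1 *v (fxh - fx)))) \<le> k * (- \<alpha>1 * V1 + \<mu>1 * (w \<bullet> w))"
      using ob kpos by (simp add: mult_left_mono)
    have "2 * (\<xi> \<bullet> fx + k * (d \<bullet> (P1 *v (fxh - fx)))) \<le> - a * (V2 + k * V1) + cw * (w \<bullet> w)"
      using pl cr kob r1 r2 unfolding cw_def by (simp add: algebra_simps)
    then show ?thesis using l1 l2 unfolding \<xi>_def d_def fx_def fxh_def by simp
  qed
  define L where "L = nP2\<^sup>2 / m2 + 1 / (k * m1)"
  define U where "U = nP2 * nPi\<^sup>2 + k * nP1"
  define b1 where "b1 = sqrt (L * U) + 1"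
  define b2 where "b2 = sqrt (L * cw / a) + 1"
  have Lpos: "L \<ge> 0" unfolding L_def using m1 m2 kpos by simp
  have Upos: "U \<ge> 0" unfolding U_def using nP1 nP2 kpos by simp
  have b1pos: "b1 > 0" unfolding b1_def using mult_nonneg_nonneg[OF Lpos Upos] by (simp add: add_nonneg_pos)
  have b2pos: "b2 > 0" unfolding b2_def using divide_nonneg_pos[OF mult_nonneg_nonneg[OF Lpos cwpos] apos] by (simp add: add_nonneg_pos)
  have b1sq: "L * U \<le> b1\<^sup>2"
  proof -
    have "L * U = (sqrt (L * U))\<^sup>2" using mult_nonneg_nonneg[OF Lpos Upos] by simp
    also have "\<dots> \<le> b1\<^sup>2" unfolding b1_def using mult_nonneg_nonneg[OF Lpos Upos] by (intro power_mono) auto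
    finally show ?thesis .
  qed
  have b2sq: "L * cw / a \<le> b2\<^sup>2"
  proof -
    have "L * cw / a = (sqrt (L * cw / a))\<^sup>2" using divide_nonneg_pos[OF mult_nonneg_nonneg[OF Lpos cwpos] apos] by simp
    also have "\<dots> \<le> b2\<^sup>2" unfolding b2_def using divide_nonneg_pos[OF mult_nonneg_nonneg[OF Lpos cwpos] apos] by (intro power_mono) auto
    finally show ?thesis .
  qed
  have lower: "(norm xv)\<^sup>2 + (norm dv)\<^sup>2 \<le> L * (vjoin (matrix_inv P2 *v xv) dv \<bullet> (Q *v vjoin (matrix_inv P2 *v xv) dv))"
    for xv dv
  proof -
    define \<xi> where "\<xi> = matrix_inv P2 *v xv"
    have xe: "xv = P2 *v \<xi>" unfolding \<xi>_def by (simp add: inv_facts[OF P2p(2)])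
    have "(norm xv)\<^sup>2 \<le> (nP2 * norm \<xi>)\<^sup>2" unfolding xe by (rule power_mono[OF nP2(2)]) simp
    also have "\<dots> = nP2\<^sup>2 / m2 * (m2 * (norm \<xi>)\<^sup>2)" using m2 by (simp add: power_mult_distrib)
    also have "\<dots> \<le> nP2\<^sup>2 / m2 * (\<xi> \<bullet> (P2 *v \<xi>))" using m2 by (intro mult_left_mono) auto
    finally have h1: "(norm xv)\<^sup>2 \<le> nP2\<^sup>2 / m2 * (\<xi> \<bullet> (P2 *v \<xi>))" .
    have "(norm dv)\<^sup>2 = 1 / (k * m1) * (k * (m1 * (norm dv)\<^sup>2))" using kpos m1 by simp
    also have "\<dots> \<le> 1 / (k * m1) * (k * (dv \<bullet> (P1 *v dv)))" using kpos m1 by (intro mult_left_mono) auto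
    finally have h2: "(norm dv)\<^sup>2 \<le> 1 / (k * m1) * (k * (dv \<bullet> (P1 *v dv)))" .
    have h3: "nP2\<^sup>2 / m2 * (\<xi> \<bullet> (P2 *v \<xi>)) \<le> L * (\<xi> \<bullet> (P2 *v \<xi>))"
      unfolding L_def using V2nn kpos m1 by (intro mult_right_mono) auto
    have h4: "1 / (k * m1) * (k * (dv \<bullet> (P1 *v dv))) \<le> L * (k * (dv \<bullet> (P1 *v dv)))"
      unfolding L_def using V1nn kpos m1 m2 by (intro mult_right_mono) auto
    show ?thesis unfolding Qquad \<xi>_def[symmetric] using h1 h2 h3 h4 by (simp add: algebra_simps)
  qed
  have upper: "vjoin (matrix_inv P2 *v xv) dv \<bullet> (Q *v vjoin (matrix_inv P2 *v xv) dv) \<le> U * ((norm xv)\<^sup>2 + (norm dv)\<^sup>2)"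
    for xv dv
  proof -
    define \<xi> where "\<xi> = matrix_inv P2 *v xv"
    have "\<xi> \<bullet> (P2 *v \<xi>) \<le> nP2 * (norm \<xi> * norm \<xi>)" using inner_Q_bound[OF nP2(2)] abs_le_iff by blast
    also have "\<dots> \<le> nP2 * ((nPi * norm xv) * (nPi * norm xv))" unfolding \<xi>_def
      using nPi nP2 by (intro mult_left_mono mult_mono) auto
    finally have h1: "\<xi> \<bullet> (P2 *v \<xi>) \<le> nP2 * nPi\<^sup>2 * (norm xv)\<^sup>2" by (simp add: power2_eq_square mult_ac)
    have "dv \<bullet> (P1 *v dv) \<le> nP1 * (norm dv * norm dv)" using inner_Q_bound[OF nP1(2)] abs_le_iff by blast
    then have h2: "k * (dv \<bullet> (P1 *v dv)) \<le> k * nP1 * (norm dv)\<^sup>2" using kpos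
      by (simp add: power2_eq_square mult_left_mono mult.assoc)
    have h3: "nP2 * nPi\<^sup>2 * (norm xv)\<^sup>2 \<le> U * (norm xv)\<^sup>2" unfolding U_def using kpos nP1 by (intro mult_right_mono) auto
    have h4: "k * nP1 * (norm dv)\<^sup>2 \<le> U * (norm dv)\<^sup>2" unfolding U_def using nP2 by (intro mult_right_mono) auto
    show ?thesis unfolding Qquad \<xi>_def[symmetric] using h1 h2 h3 h4 by (simp add: algebra_simps)
  qed
  show ?thesis unfolding closed_loop_ISS_def
  proof (intro exI conjI allI impI)
    show "classKL (\<lambda>r t. b1 * r * exp (- (a / 2 * t)))" by (rule KL_example[OF b1pos]) (use apos in simp)
    show "classK (\<lambda>s. b2 * s)" by (rule K_example[OF b2pos])
    fix x xh :: "real \<Rightarrow> real^'nx" and w :: "real \<Rightarrow> real^'nw" and t :: real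
    assume sol: "cl_solution A B C D E Ew Fw Cq p L1 L2 K1 x xh w"
      and bdd: "bdd_above ((\<lambda>s. norm (w s)) ` {0..})" and t: "0 \<le> t"
    define S where "S = (SUP s\<in>{0..}. norm (w s))"
    have wS: "norm (w s) \<le> S" if "s \<ge> 0" for s :: real unfolding S_def using that bdd by (intro cSUP_upper) auto
    have S0: "S \<ge> 0"
    proof -
      have "norm (w 0) \<le> S" by (rule wS) simp
      then show ?thesis using norm_ge_zero[of "w 0"] by linarith
    qed
    define fx where "fx s = cl_rhs_x A B E Ew Cq p K1 (x s) (xh s) (w s)" for s
    define fxh where "fxh s = cl_rhs_xh A B C D E Fw Cq p L1 L2 K1 (x s) (xh s) (w s)" for s
    define Xs where "Xs s = vjoin (matrix_inv P2 *v x s) (xh s - x s)" for s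
    define Fs where "Fs s = vjoin (matrix_inv P2 *v fx s) (fxh s - fx s)" for s
    define W where "W s = Xs s \<bullet> (Q *v Xs s)" for s
    have int: "(Fs has_integral (Xs u - Xs 0)) {0..u}" if "0 \<le> u" "u \<le> t" for u
    proof -
      have ix: "(fx has_integral (x u - x 0)) {0..u}" and ixh: "(fxh has_integral (xh u - xh 0)) {0..u}"
        using sol that unfolding cl_solution_def fx_def fxh_def by auto
      have "((\<lambda>s. vcat (mat 1) 0 *v (matrix_inv P2 *v fx s) + vcat 0 (mat 1) *v (fxh s - fx s)) has_integral
          (vcat (mat 1) 0 *v (matrix_inv P2 *v (x u - x 0)) + vcat 0 (mat 1) *v ((xh u - xh 0) - (x u - x 0)))) {0..u}"
        by (intro has_integral_add hi_mv has_integral_diff ix ixh)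
      moreover have "(\<lambda>s. vcat (mat 1) 0 *v (matrix_inv P2 *v fx s) + vcat 0 (mat 1) *v (fxh s - fx s)) = Fs"
        unfolding Fs_def vjoin_as by simp
      moreover have "vcat (mat 1) 0 *v (matrix_inv P2 *v (x u - x 0)) + vcat 0 (mat 1) *v ((xh u - xh 0) - (x u - x 0)) = Xs u - Xs 0"
        unfolding Xs_def vjoin_minus by (simp add: vjoin_as mvsimps algebra_simps)
      ultimately show ?thesis by simp
    qed
    have ineq: "2 * (Xs s \<bullet> (Q *v Fs s)) \<le> - a * (Xs s \<bullet> (Q *v Xs s)) + cw * S\<^sup>2" if "0 \<le> s" "s \<le> t" for s
    proof -
      have "w s \<bullet> w s \<le> S\<^sup>2"
        using power_mono[OF wS[OF that(1)] norm_ge_zero, of 2] by (simp add: power2_norm_eq_inner)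
      then have "cw * (w s \<bullet> w s) \<le> cw * S\<^sup>2" using cwpos by (simp add: mult_left_mono)
      then show ?thesis using point[of "x s" "xh s" "w s"] unfolding Xs_def Fs_def fx_def fxh_def by linarith
    qed
    have Wt: "W t \<le> exp (- (a * t)) * W 0 + cw * S\<^sup>2 / a"
    proof (cases "t = 0")
      case True
      then show ?thesis using cwpos apos by simp
    next
      case False
      then have tpos: "t > 0" using t by simp
      have cS: "cw * S\<^sup>2 \<ge> 0" using cwpos by simp
      have "exp (a * t) * (W t - cw * S\<^sup>2 / a) \<le> W 0 - cw * S\<^sup>2 / a"
        unfolding W_def by (rule comparison[OF Qsym apos cS tpos int ineq])
      then have "exp (- (a * t)) * (exp (a * t) * (W t - cw * S\<^sup>2 / a)) \<le> exp (- (a * t)) * (W 0 - cw * S\<^sup>2 / a)"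
        by (simp add: mult_left_mono)
      moreover have "exp (- (a * t)) * (exp (a * t) * Z) = Z" for Z :: real
        by (simp add: exp_minus field_simps)
      ultimately have "W t - cw * S\<^sup>2 / a \<le> exp (- (a * t)) * (W 0 - cw * S\<^sup>2 / a)"
        by simp
      also have "\<dots> \<le> exp (- (a * t)) * W 0"
        using cS apos by (simp add: mult_left_mono)
      finally show ?thesis by simp
    qed
    define r where "r = norm (x 0, x 0 - xh 0)"
    have r2: "r\<^sup>2 = (norm (x 0))\<^sup>2 + (norm (xh 0 - x 0))\<^sup>2"
      unfolding r_def norm_Pair by (simp add: norm_minus_commute)
    have n2: "(norm (x t, x t - xh t))\<^sup>2 = (norm (x t))\<^sup>2 + (norm (xh t - x t))\<^sup>2"
      unfolding norm_Pair by (simp add: norm_minus_commute)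
    have lo: "(norm (x t, x t - xh t))\<^sup>2 \<le> L * W t" unfolding n2 W_def Xs_def by (rule lower)
    have up: "W 0 \<le> U * r\<^sup>2" unfolding r2 W_def Xs_def by (rule upper)
    have "(norm (x t, x t - xh t))\<^sup>2 \<le> L * (exp (- (a * t)) * (U * r\<^sup>2) + cw * S\<^sup>2 / a)"
    proof -
      have "W t \<le> exp (- (a * t)) * (U * r\<^sup>2) + cw * S\<^sup>2 / a"
        using Wt up by (smt (verit) exp_gt_zero mult_left_mono)
      then show ?thesis using lo Lpos by (smt (verit) mult_left_mono)
    qed
    also have "\<dots> = (L * U) * r\<^sup>2 * exp (- (a * t)) + (L * cw / a) * S\<^sup>2"
      by (simp add: algebra_simps)
    also have "\<dots> \<le> b1\<^sup>2 * r\<^sup>2 * exp (- (a * t)) + b2\<^sup>2 * S\<^sup>2"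
      using b1sq b2sq by (intro add_mono mult_right_mono) auto
    also have "\<dots> \<le> (b1 * r * exp (- (a / 2 * t)) + b2 * S)\<^sup>2"
    proof -
      have ee: "(exp (- (a / 2 * t)))\<^sup>2 = exp (- (a * t))"
        by (simp add: power2_eq_square exp_add[symmetric])
      have nn: "0 \<le> b1 * r * exp (- (a / 2 * t)) * (b2 * S)"
        unfolding r_def using b1pos b2pos S0 by simp
      have ee2: "(exp (- (a * t / 2)))\<^sup>2 = exp (- (a * t))"
        by (simp add: power2_eq_square exp_add[symmetric])
      show ?thesis unfolding power2_sum using nn
        by (simp add: power_mult_distrib ee ee2 mult_ac)
    qed
    finally have "(norm (x t, x t - xh t))\<^sup>2 \<le> (b1 * r * exp (- (a / 2 * t)) + b2 * S)\<^sup>2" .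
    moreover have "0 \<le> b1 * r * exp (- (a / 2 * t)) + b2 * S"
      unfolding r_def using b1pos b2pos S0 by simp
    ultimately show "norm (x t, x t - xh t) \<le> b1 * norm (x 0, x 0 - xh 0) * exp (- (a / 2 * t)) + b2 * (SUP s\<in>{0..}. norm (w s))"
      unfolding r_def S_def by (rule power2_le_imp_le)
  qed
qed


end
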